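(* Let $G=(\mathcal{V},\mathcal{E})$, the corrupt set $\mathcal{V}_c$, and the other graph notation be as in the context, and assume every honest node has at least one corrupt neighbour. Let $p$ be an integer larger than any possible value of $\sum_{j\in\mathcal{V}}S_j$, and let the private data $S_1,\dots,S_n$ be mutually independent random variables with values in $\{0,\dots,p-1\}$. For every ordered pair $(i,j)$ with $j\in\mathcal{N}_i$ let $R_i^j$ be uniform on $\mathbb{Z}_p$, all these mutually independent and independent of $(S_1,\dots,S_n)$; set $R_i^i=S_i-\sum_{j\in\mathcal{N}_i}R_i^j\bmod p$ and $$S_i'=R_i^i+\textstyle\sum_{j\in\mathcal{N}_i}R_j^i \bmod p\ \in\{0,\dots,p-1\}.$$ Run the following iteration with inputs $S_i'$ (viewed as real numbers), constants $c>0$, $\theta\in[0,1)$, and initialization $z_{i|j}^{(0)}=0$: for $t\ge 0$, $$x_i^{(t+1)}=\frac{S_i'-\sum_{j\in\mathcal{N}_i}B_{i|j}z_{i|j}^{(t)}}{1+c\,d_i},\qquad z_{j|i}^{(t+1)}=\theta z_{j|i}^{(t)}+(1-\theta)\big(z_{i|j}^{(t)}+2cB_{i|j}x_i^{(t+1)}\big)\ \ (j\in\mathcal{N}_i).$$ Let the adversary's view be $\mathcal{O}=\{S_j\}_{j\in\mathcal{V}_c}\cup\{R_j^k,R_k^j\}_{\{j,k\}\in\mathcal{E}_c}\cup\{X^{(t)}\}_{t\ge1}$, where $X^{(t)}=(x_1^{(t)},\dots,x_n^{(t)})$. Then for every honest node $i\in\mathcal{V}_h$, $$\mathrm{I}(S_i;\mathcal{O})=\mathrm{I}\Big(S_i;\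 \textstyle\sum_{j\in\mathcal{V}_{h,1}}S_j\Big).$$
   Context: $G=(\mathcal{V},\mathcal{E})$ is a connected undirected graph, $\mathcal{V}=\{1,\dots,n\}$, $\mathcal{N}_i$ the neighbours of $i$, $d_i=|\mathcal{N}_i|$. For an edge $\{i,j\}$ with $i<j$: $B_{i|j}=1$, $B_{j|i}=-1$. $\mathcal{V}_c\subseteq\mathcal{V}$ is the set of corrupt nodes, $\mathcal{V}_h=\mathcal{V}\setminus\mathcal{V}_c$ the honest nodes, $\mathcal{E}_h$ the edges with both endpoints honest, $\mathcal{E}_c=\mathcal{E}\setminus\mathcal{E}_h$, $G_h=(\mathcal{V}_h,\mathcal{E}_h)$, and $\mathcal{V}_{h,1}$ is the vertex set of the connected component of $G_h$ containing the considered honest node $i$. $\mathrm{I}$ denotes mutual information. *)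

theory Defs
  imports "HOL-Probability.Probability"
begin

definition nbrs :: "nat set set \<Rightarrow> nat \<Rightarrow> nat set" where
  "nbrs E i = {j. {i, j} \<in> E}"

definition adj :: "nat set set \<Rightarrow> (nat \<times> nat) set" where
  "adj E = {(i, j). {i, j} \<in> E}"

definition simple_graph :: "nat \<Rightarrow> nat set set \<Rightarrow> bool" where
  "simple_graph n E \<longleftrightarrow> (\<forall>e\<in>E. \<exists>i j. e = {i, j} \<and> i \<noteq> j \<and> i \<in> {1..n} \<and> j \<in> {1..n})"

definition connected_graph :: "nat \<Rightarrow> nat set set \<Rightarrow> bool" where
  "connected_graph n E \<longleftrightarrow> (\<forall>i\<in>{1..n}. \<forall>j\<in>{1..n}. (i, j) \<in> (adj E)\<^sup>*)"

definition Bsign :: "nat \<Rightarrow> nat \<Rightarrow> real" where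
  "Bsign i j = (if i < j then 1 else -1)"

definition honest_edges :: "nat set set \<Rightarrow> nat set \<Rightarrow> nat set set" where
  "honest_edges E Vh = {e \<in> E. e \<subseteq> Vh}"

definition honest_component :: "nat set set \<Rightarrow> nat set \<Rightarrow> nat \<Rightarrow> nat set" where
  "honest_component E Vh i = {j. (i, j) \<in> (adj (honest_edges E Vh))\<^sup>*}"

text \<open>R i j w is R_i^j. Self share R_i^i = S_i - sum_{j in N_i} R_i^j mod p.\<close>
definition self_share ::
  "nat set set \<Rightarrow> nat \<Rightarrow> (nat \<Rightarrow> 'm \<Rightarrow> nat) \<Rightarrow> (nat \<Rightarrow> nat \<Rightarrow> 'm \<Rightarrow> nat) \<Rightarrow> nat \<Rightarrow> 'm \<Rightarrow> int" where
  "self_share E p S R i w = (int (S i w) - (\<Sum>j\<in>nbrs E i. int (R i j w))) mod int p"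

definition masked_input ::
  "nat set set \<Rightarrow> nat \<Rightarrow> (nat \<Rightarrow> 'm \<Rightarrow> nat) \<Rightarrow> (nat \<Rightarrow> nat \<Rightarrow> 'm \<Rightarrow> nat) \<Rightarrow> nat \<Rightarrow> 'm \<Rightarrow> int" where
  "masked_input E p S R i w =
     (self_share E p S R i w + (\<Sum>j\<in>nbrs E i. int (R j i w))) mod int p"

text \<open>Auxiliary variables: pdmm_z E c \<theta> s t i j = z_{i|j}^{(t)} (input s).
  pdmm_x E c \<theta> s t i = x_i^{(t+1)}.\<close>
fun pdmm_z :: "nat set set \<Rightarrow> real \<Rightarrow> real \<Rightarrow> (nat \<Rightarrow> real) \<Rightarrow> nat \<Rightarrow> nat \<Rightarrow> nat \<Rightarrow> real" where
  "pdmm_z E c \<theta> s 0 = (\<lambda>i j. 0)"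
| "pdmm_z E c \<theta> s (Suc t) =
     (\<lambda>j i. \<theta> * pdmm_z E c \<theta> s t j i
        + (1 - \<theta>) * (pdmm_z E c \<theta> s t i j + 2 * c * Bsign i j *
            ((s i - (\<Sum>k\<in>nbrs E i. Bsign i k * pdmm_z E c \<theta> s t i k))
              / (1 + c * real (card (nbrs E i))))))"

definition pdmm_x :: "nat set set \<Rightarrow> real \<Rightarrow> real \<Rightarrow> (nat \<Rightarrow> real) \<Rightarrow> nat \<Rightarrow> nat \<Rightarrow> real" where
  "pdmm_x E c \<theta> s t i =
     (s i - (\<Sum>j\<in>nbrs E i. Bsign i j * pdmm_z E c \<theta> s t i j)) / (1 + c * real (card (nbrs E i)))"

text \<open>O = ({S_j}_{j in Vc}, {R_j^k, R_k^j}_{{j,k} in Ec}, (X^{(t)})_{t>=1}); component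
  t of the third entry is X^{(t+1)} restricted to {1..n}.\<close>
definition adversary_view ::
  "nat \<Rightarrow> nat set set \<Rightarrow> nat set \<Rightarrow> nat \<Rightarrow> real \<Rightarrow> real \<Rightarrow>
   (nat \<Rightarrow> 'm \<Rightarrow> nat) \<Rightarrow> (nat \<Rightarrow> nat \<Rightarrow> 'm \<Rightarrow> nat) \<Rightarrow> 'm \<Rightarrow>
   (nat \<Rightarrow> nat) \<times> (nat \<times> nat \<Rightarrow> nat) \<times> (nat \<Rightarrow> nat \<Rightarrow> real)" where
  "adversary_view n E Vc p c \<theta> S R w =
     (restrict (\<lambda>j. S j w) Vc,
      restrict (\<lambda>(j, k). R j k w) {(j, k). {j, k} \<in> E - honest_edges E ({1..n} - Vc)},
      (\<lambda>t. restrict (pdmm_x E c \<theta> (\<lambda>i. real_of_int (masked_input E p S R i w)) t) {1..n}))"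

end

theory Submission
  imports Defs "HOL-Number_Theory.Cong"
begin

lemma (in prob_space) distributed_countable:
  assumes A: "countable A" and XA: "X \<in> space M \<rightarrow> A"
    and meas: "\<And>a. a \<in> A \<Longrightarrow> X -` {a} \<inter> space M \<in> sets M"
  shows "distributed M (count_space A) X (\<lambda>a. ennreal (prob (X -` {a} \<inter> space M)))"
proof -
  have mX: "X \<in> measurable M (count_space A)"
    using A XA meas by (simp add: measurable_count_space_eq_countable)
  have "distr M (count_space A) X = density (count_space A) (\<lambda>a. ennreal (prob (X -` {a} \<inter> space M)))"
  proof (rule measure_eqI_countable[OF _ _ A])
    fix a assume a: "a \<in> A"
    have "emeasure (distr M (count_space A) X) {a} = emeasure M (X -` {a} \<inter> space M)"
      using a mX by (simp add: emeasure_distr)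
    also have "\<dots> = ennreal (prob (X -` {a} \<inter> space M))"
      using meas[OF a] by (simp add: emeasure_eq_measure)
    also have "\<dots> = emeasure (density (count_space A) (\<lambda>a. ennreal (prob (X -` {a} \<inter> space M)))) {a}"
      using a by (simp add: emeasure_density nn_integral_count_space_indicator nn_integral_indicator_finite)
    finally show "emeasure (distr M (count_space A) X) {a} = emeasure (density (count_space A) (\<lambda>a. ennreal (prob (X -` {a} \<inter> space M)))) {a}" .
  qed auto
  then show ?thesis using mX unfolding distributed_def by simp
qed


context information_space begin

lemma MI_finite_sum:
  fixes X :: "'a \<Rightarrow> 'b" and Y :: "'a \<Rightarrow> 'c"
  assumes cX: "countable (X ` space M)" and cY: "countable (Y ` space M)"
    and mX: "\<And>a. X -` {a} \<inter> space M \<in> sets M"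
    and mY: "\<And>a. Y -` {a} \<inter> space M \<in> sets M"
    and FX: "finite FX" "FX \<subseteq> X ` space M"
    and FY: "finite FY" "FY \<subseteq> Y ` space M"
    and supX: "\<And>a. a \<in> X ` space M \<Longrightarrow> a \<notin> FX \<Longrightarrow> prob (X -` {a} \<inter> space M) = 0"
    and supY: "\<And>a. a \<in> Y ` space M \<Longrightarrow> a \<notin> FY \<Longrightarrow> prob (Y -` {a} \<inter> space M) = 0"
  shows "mutual_information b (count_space (X ` space M)) (count_space (Y ` space M)) X Y =
    (\<Sum>x\<in>FX. \<Sum>y\<in>FY. prob ((\<lambda>w. (X w, Y w)) -` {(x, y)} \<inter> space M) *
        log b (prob ((\<lambda>w. (X w, Y w)) -` {(x, y)} \<inter> space M) /
               (prob (X -` {x} \<inter> space M) * prob (Y -` {y} \<inter> space M))))"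
proof -
  let ?A = "X ` space M" and ?B = "Y ` space M"
  define Px where "Px = (\<lambda>a. prob (X -` {a} \<inter> space M))"
  define Py where "Py = (\<lambda>a. prob (Y -` {a} \<inter> space M))"
  define Pxy where "Pxy = (\<lambda>ab. prob ((\<lambda>w. (X w, Y w)) -` {ab} \<inter> space M))"
  have cAB: "countable (?A \<times> ?B)" using cX cY by simp
  have pm: "count_space ?A \<Otimes>\<^sub>M count_space ?B = count_space (?A \<times> ?B)"
    using cX cY by (rule pair_measure_countable)
  have dX: "distributed M (count_space ?A) X (\<lambda>a. ennreal (Px a))"
    unfolding Px_def using cX mX by (intro distributed_countable) auto
  have dY: "distributed M (count_space ?B) Y (\<lambda>a. ennreal (Py a))"
    unfolding Py_def using cY mY by (intro distributed_countable) auto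
  have mXY: "(\<lambda>w. (X w, Y w)) -` {ab} \<inter> space M \<in> sets M" for ab
  proof -
    have "(\<lambda>w. (X w, Y w)) -` {ab} \<inter> space M = (X -` {fst ab} \<inter> space M) \<inter> (Y -` {snd ab} \<inter> space M)"
      by (cases ab) auto
    then show ?thesis using mX mY by auto
  qed
  have dXY: "distributed M (count_space ?A \<Otimes>\<^sub>M count_space ?B) (\<lambda>w. (X w, Y w)) (\<lambda>ab. ennreal (Pxy ab))"
    unfolding pm Pxy_def using cAB mXY by (intro distributed_countable) auto
  have sf: "sigma_finite_measure (count_space ?A)" "sigma_finite_measure (count_space ?B)"
    using cX cY by (auto intro!: sigma_finite_measure_count_space_countable)
  have MI: "mutual_information b (count_space ?A) (count_space ?B) X Y =
     integral\<^sup>L (count_space ?A \<Otimes>\<^sub>M count_space ?B) (\<lambda>x. Pxy x * log b (Pxy x / (Px (fst x) * Py (snd x))))"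
    by (rule mutual_information_distr[OF sf dX _ dY _ dXY]) (auto simp: Px_def Py_def Pxy_def)
  define f where "f = (\<lambda>x. Pxy x * log b (Pxy x / (Px (fst x) * Py (snd x))))"
  have Pxy_le_x: "Pxy (x, y) \<le> Px x" for x y
    unfolding Pxy_def Px_def by (rule finite_measure_mono) (auto intro: mX)
  have Pxy_le_y: "Pxy (x, y) \<le> Py y" for x y
    unfolding Pxy_def Py_def by (rule finite_measure_mono) (auto intro: mY)
  have supp: "{ab \<in> ?A \<times> ?B. f ab \<noteq> 0} \<subseteq> FX \<times> FY"
  proof safe
    fix w1 w2 assume w: "w1 \<in> space M" "w2 \<in> space M" and ne: "f (X w1, Y w2) \<noteq> 0"
    then have ne': "Pxy (X w1, Y w2) \<noteq> 0" unfolding f_def by auto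
    show "X w1 \<in> FX"
    proof (rule ccontr)
      assume "X w1 \<notin> FX"
      then have "Px (X w1) = 0" using supX w unfolding Px_def by auto
      with Pxy_le_x[of "X w1" "Y w2"] ne' show False
        by (metis Pxy_def measure_nonneg order_antisym)
    qed
    show "Y w2 \<in> FY"
    proof (rule ccontr)
      assume "Y w2 \<notin> FY"
      then have "Py (Y w2) = 0" using supY w unfolding Py_def by auto
      with Pxy_le_y[of "X w1" "Y w2"] ne' show False
        by (metis Pxy_def measure_nonneg order_antisym)
    qed
  qed
  have fin: "finite {ab \<in> ?A \<times> ?B. f ab \<noteq> 0}"
    using supp FX FY by (meson finite_SigmaI finite_subset)
  have "integral\<^sup>L (count_space (?A \<times> ?B)) f = (\<Sum>ab | ab \<in> ?A \<times> ?B \<and> f ab \<noteq> 0. f ab)"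
    by (rule lebesgue_integral_count_space_finite_support) (simp add: fin)
  also have "\<dots> = (\<Sum>ab \<in> FX \<times> FY. f ab)"
    using supp FX FY by (intro sum.mono_neutral_left) auto
  also have "\<dots> = (\<Sum>x\<in>FX. \<Sum>y\<in>FY. f (x, y))"
    by (simp add: sum.cartesian_product)
  finally show ?thesis
    unfolding MI pm f_def[symmetric] by (simp add: f_def Pxy_def Px_def Py_def)
qed

end

context information_space begin

lemma AE_in_support:
  fixes V :: "'a \<Rightarrow> 'c"
  assumes cV: "countable (V ` space M)" and mV: "\<And>a. V -` {a} \<inter> space M \<in> sets M"
    and supV: "\<And>a. a \<in> V ` space M \<Longrightarrow> a \<notin> FV \<Longrightarrow> prob (V -` {a} \<inter> space M) = 0"
  shows "AE w in M. V w \<in> FV"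
proof -
  have N: "(\<Union>a\<in>V ` space M - FV. V -` {a} \<inter> space M) \<in> null_sets M"
    using cV mV supV by (intro null_sets_UN') (auto simp: null_sets_def emeasure_eq_measure)
  show ?thesis
    by (rule AE_I'[OF N]) auto
qed

lemma MI_sufficient:
  fixes X :: "'a \<Rightarrow> 'b" and V :: "'a \<Rightarrow> 'c" and Z :: "'a \<Rightarrow> 'd" and g :: "'c \<Rightarrow> 'd"
  assumes cX: "countable (X ` space M)" and cV: "countable (V ` space M)"
    and mX: "\<And>a. X -` {a} \<inter> space M \<in> sets M"
    and mV: "\<And>a. V -` {a} \<inter> space M \<in> sets M"
    and mZ: "\<And>a. Z -` {a} \<inter> space M \<in> sets M"
    and FX: "finite FX" "FX \<subseteq> X ` space M"
    and FV: "finite FV" "FV \<subseteq> V ` space M"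
    and supX: "\<And>a. a \<in> X ` space M \<Longrightarrow> a \<notin> FX \<Longrightarrow> prob (X -` {a} \<inter> space M) = 0"
    and supV: "\<And>a. a \<in> V ` space M \<Longrightarrow> a \<notin> FV \<Longrightarrow> prob (V -` {a} \<inter> space M) = 0"
    and Zg: "\<And>w. w \<in> space M \<Longrightarrow> Z w = g (V w)"
    and ci: "\<And>x v. x \<in> FX \<Longrightarrow> v \<in> FV \<Longrightarrow>
       prob ((\<lambda>w. (X w, V w)) -` {(x, v)} \<inter> space M) * prob (Z -` {g v} \<inter> space M) =
       prob ((\<lambda>w. (X w, Z w)) -` {(x, g v)} \<inter> space M) * prob (V -` {v} \<inter> space M)"
  shows "mutual_information b (count_space (X ` space M)) (count_space (V ` space M)) X V =
         mutual_information b (count_space (X ` space M)) (count_space (Z ` space M)) X Z"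
proof -
  have ZV: "Z ` space M = g ` V ` space M" using Zg by (auto simp: image_iff)
  have cZ: "countable (Z ` space M)" unfolding ZV using cV by simp
  have FZ: "finite (g ` FV)" "g ` FV \<subseteq> Z ` space M" using FV unfolding ZV by auto
  have AEV: "AE w in M. V w \<in> FV" by (rule AE_in_support[OF cV mV supV])
  let ?Pxv = "\<lambda>x v. prob ((\<lambda>w. (X w, V w)) -` {(x, v)} \<inter> space M)"
  let ?Pxz = "\<lambda>x z. prob ((\<lambda>w. (X w, Z w)) -` {(x, z)} \<inter> space M)"
  let ?Px = "\<lambda>x. prob (X -` {x} \<inter> space M)"
  let ?Pv = "\<lambda>v. prob (V -` {v} \<inter> space M)"
  let ?Pz = "\<lambda>z. prob (Z -` {z} \<inter> space M)"
  have mXV: "(\<lambda>w. (X w, V w)) -` {(x, v)} \<inter> space M \<in> sets M" for x v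
  proof -
    have "(\<lambda>w. (X w, V w)) -` {(x, v)} \<inter> space M = (X -` {x} \<inter> space M) \<inter> (V -` {v} \<inter> space M)" by auto
    then show ?thesis using mX mV by auto
  qed
  have mXZ: "(\<lambda>w. (X w, Z w)) -` {(x, z)} \<inter> space M \<in> sets M" for x z
  proof -
    have "(\<lambda>w. (X w, Z w)) -` {(x, z)} \<inter> space M = (X -` {x} \<inter> space M) \<inter> (Z -` {z} \<inter> space M)" by auto
    then show ?thesis using mX mZ by auto
  qed
  have supZ: "?Pz z = 0" if z: "z \<in> Z ` space M" "z \<notin> g ` FV" for z
  proof -
    have "?Pz z = measure M {}"
    proof (rule finite_measure_eq_AE)
      show "AE w in M. (w \<in> Z -` {z} \<inter> space M) = (w \<in> {})"
        using AEV by eventually_elim (use z Zg in \<open>auto, metis image_eqI\<close>)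
    qed (use mZ in auto)
    then show ?thesis by simp
  qed
  have sumv: "(\<Sum>v\<in>{v\<in>FV. g v = z}. ?Pxv x v) = ?Pxz x z" for x z
  proof -
    have "(\<Sum>v\<in>{v\<in>FV. g v = z}. ?Pxv x v) =
        measure M (\<Union>v\<in>{v\<in>FV. g v = z}. (\<lambda>w. (X w, V w)) -` {(x, v)} \<inter> space M)"
      using FV mXV by (intro measure_finite_Union[symmetric]) (auto simp: disjoint_family_on_def emeasure_eq_measure)
    also have "\<dots> = ?Pxz x z"
    proof (rule finite_measure_eq_AE)
      show "AE w in M. (w \<in> (\<Union>v\<in>{v\<in>FV. g v = z}. (\<lambda>w. (X w, V w)) -` {(x, v)} \<inter> space M)) =
                       (w \<in> (\<lambda>w. (X w, Z w)) -` {(x, z)} \<inter> space M)"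
        using AEV by eventually_elim (use Zg in auto)
      show "(\<Union>v\<in>{v\<in>FV. g v = z}. (\<lambda>w. (X w, V w)) -` {(x, v)} \<inter> space M) \<in> sets M"
        using FV mXV by (intro sets.finite_UN) auto
    qed (use mXZ in auto)
    finally show ?thesis .
  qed
  have Pxv_le: "?Pxv x v \<le> ?Pv v" for x v
    by (rule finite_measure_mono) (auto intro: mV)
  have Pv_le: "?Pv v \<le> ?Pz (g v)" if "v \<in> FV" for v
    by (rule finite_measure_mono) (use Zg mZ in auto)
  have trm: "?Pxv x v * log b (?Pxv x v / (?Px x * ?Pv v)) =
              ?Pxv x v * log b (?Pxz x (g v) / (?Px x * ?Pz (g v)))" if x: "x \<in> FX" and v: "v \<in> FV" for x v
  proof (cases "?Pxv x v = 0")
    case True then show ?thesis by simp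
  next
    case False
    then have "?Pxv x v > 0" using measure_nonneg by (metis less_eq_real_def)
    then have pv: "?Pv v > 0" using Pxv_le[of x v] by linarith
    then have pz: "?Pz (g v) > 0" using Pv_le[OF v] by linarith
    have "?Pxv x v / ?Pv v = ?Pxz x (g v) / ?Pz (g v)"
      using ci[OF x v] pv pz by (simp add: field_simps)
    then have "?Pxv x v / (?Px x * ?Pv v) = ?Pxz x (g v) / (?Px x * ?Pz (g v))"
      by (metis (no_types, lifting) divide_divide_eq_left mult.commute)
    then show ?thesis by simp
  qed
  have "mutual_information b (count_space (X ` space M)) (count_space (V ` space M)) X V =
    (\<Sum>x\<in>FX. \<Sum>v\<in>FV. ?Pxv x v * log b (?Pxv x v / (?Px x * ?Pv v)))"
    by (rule MI_finite_sum[OF cX cV mX mV FX FV supX supV])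
  also have "\<dots> = (\<Sum>x\<in>FX. \<Sum>v\<in>FV. ?Pxv x v * log b (?Pxz x (g v) / (?Px x * ?Pz (g v))))"
    using trm by (intro sum.cong refl) auto
  also have "\<dots> = (\<Sum>x\<in>FX. \<Sum>z\<in>g ` FV. ?Pxz x z * log b (?Pxz x z / (?Px x * ?Pz z)))"
  proof (rule sum.cong[OF refl])
    fix x assume "x \<in> FX"
    have "(\<Sum>v\<in>FV. ?Pxv x v * log b (?Pxz x (g v) / (?Px x * ?Pz (g v)))) =
          (\<Sum>z\<in>g ` FV. \<Sum>v\<in>{v\<in>FV. g v = z}. ?Pxv x v * log b (?Pxz x z / (?Px x * ?Pz z)))"
      by (subst sum.image_gen[OF FV(1), where g=g]) (auto intro!: sum.cong)
    also have "\<dots> = (\<Sum>z\<in>g ` FV. (\<Sum>v\<in>{v\<in>FV. g v = z}. ?Pxv x v) * log b (?Pxz x z / (?Px x * ?Pz z)))"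
      by (simp add: sum_distrib_right)
    also have "\<dots> = (\<Sum>z\<in>g ` FV. ?Pxz x z * log b (?Pxz x z / (?Px x * ?Pz z)))"
      by (simp add: sumv)
    finally show "(\<Sum>v\<in>FV. ?Pxv x v * log b (?Pxz x (g v) / (?Px x * ?Pz (g v)))) =
          (\<Sum>z\<in>g ` FV. ?Pxz x z * log b (?Pxz x z / (?Px x * ?Pz z)))" .
  qed
  also have "\<dots> = mutual_information b (count_space (X ` space M)) (count_space (Z ` space M)) X Z"
    by (rule MI_finite_sum[OF cX cZ mX mZ FX FZ supX supZ, symmetric])
  finally show ?thesis .
qed

end

locale thm_setting = information_space M b for M :: "'m measure" and b :: real +
  fixes n p :: nat and E :: "nat set set" and Vc :: "nat set"
    and S :: "nat \<Rightarrow> 'm \<Rightarrow> nat" and R :: "nat \<Rightarrow> nat \<Rightarrow> 'm \<Rightarrow> nat"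
  assumes n_pos: "1 \<le> n" and graph: "simple_graph n E"
    and Vc_sub: "Vc \<subseteq> {1..n}"
    and p_large: "\<forall>w\<in>space M. (\<Sum>j\<in>{1..n}. S j w) < p"
    and indep: "indep_vars (\<lambda>_. count_space UNIV)
          (case_sum S (\<lambda>(j, k). R j k))
          (Inl ` {1..n} \<union> Inr ` {(j, k). j \<in> {1..n} \<and> k \<in> nbrs E j})"
    and R_unif: "\<forall>j\<in>{1..n}. \<forall>k\<in>nbrs E j.
          distr M (count_space UNIV) (R j k) = measure_pmf (pmf_of_set {0..<p})"
begin

abbreviation "VV \<equiv> {1..n}"
abbreviation "DE \<equiv> adj E"

lemma E_edge: "e \<in> E \<Longrightarrow> \<exists>i j. e = {i, j} \<and> i \<noteq> j \<and> i \<in> VV \<and> j \<in> VV"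
  using graph unfolding simple_graph_def by blast

lemma DE_sub: "DE \<subseteq> VV \<times> VV"
proof
  fix x assume "x \<in> DE"
  then obtain a c where x: "x = (a, c)" "{a, c} \<in> E" unfolding adj_def by auto
  then obtain i j where "{a, c} = {i, j}" "i \<in> VV" "j \<in> VV" using E_edge by blast
  then show "x \<in> VV \<times> VV" using x by (auto simp: doubleton_eq_iff)
qed

lemma DE_irrefl: "(j, j) \<notin> DE"
proof
  assume "(j, j) \<in> DE"
  then have "{j} \<in> E" unfolding adj_def by auto
  then obtain a c where "{j} = {a, c}" "a \<noteq> c" using E_edge by blast
  then show False by (metis doubleton_eq_iff insert_absorb2)
qed

lemma DE_sym: "(j, k) \<in> DE \<longleftrightarrow> (k, j) \<in> DE"
  unfolding adj_def by (auto simp: insert_commute)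

lemma finite_DE: "finite DE"
  using DE_sub by (rule finite_subset) simp

lemma nbrs_DE: "k \<in> nbrs E j \<longleftrightarrow> (j, k) \<in> DE"
  unfolding nbrs_def adj_def by simp

lemma index_eq: "{(j, k). j \<in> VV \<and> k \<in> nbrs E j} = DE"
  using DE_sub by (auto simp: nbrs_DE)

lemma nbrs_sub: "nbrs E j \<subseteq> VV"
  using DE_sub by (auto simp: nbrs_DE)

lemma finite_nbrs: "finite (nbrs E j)"
  using nbrs_sub by (rule finite_subset) simp

lemma rv_S: "j \<in> VV \<Longrightarrow> random_variable (count_space UNIV) (S j)"
  using indep unfolding indep_vars_def by force

lemma rv_R: "(j, k) \<in> DE \<Longrightarrow> random_variable (count_space UNIV) (R j k)"
  using indep unfolding indep_vars_def index_eq by force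

lemma meas_S: "j \<in> VV \<Longrightarrow> S j -` A \<inter> space M \<in> sets M"
  using rv_S by (simp add: measurable_sets)

lemma meas_R: "(j, k) \<in> DE \<Longrightarrow> R j k -` A \<inter> space M \<in> sets M"
  using rv_R by (simp add: measurable_sets)

lemma p_pos: "p > 0"
proof -
  obtain w where "w \<in> space M" using not_empty by blast
  then show ?thesis using p_large by force
qed

lemma S_lt_p: "w \<in> space M \<Longrightarrow> j \<in> VV \<Longrightarrow> S j w < p"
proof -
  assume w: "w \<in> space M" and j: "j \<in> VV"
  have "S j w \<le> (\<Sum>j\<in>VV. S j w)"
    using j by (intro member_le_sum) auto
  then show ?thesis using p_large w by fastforce
qed

lemma prob_R: "(j, k) \<in> DE \<Longrightarrow> prob (R j k -` A \<inter> space M) = card ({0..<p} \<inter> A) / p"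
proof -
  assume jk: "(j, k) \<in> DE"
  then have j: "j \<in> VV" and k: "k \<in> nbrs E j" using DE_sub nbrs_DE by auto
  have "prob (R j k -` A \<inter> space M) = measure (distr M (count_space UNIV) (R j k)) A"
    using rv_R[OF jk] by (simp add: measure_distr)
  also have "\<dots> = measure (measure_pmf (pmf_of_set {0..<p})) A"
    using R_unif j k by simp
  also have "\<dots> = card ({0..<p} \<inter> A) / card {0..<p}"
    using p_pos by (subst measure_pmf_of_set) auto
  finally show ?thesis by simp
qed

end

context thm_setting begin

definition cfg :: "'m \<Rightarrow> (nat \<Rightarrow> nat) \<times> (nat \<times> nat \<Rightarrow> nat)" where
  "cfg w = (restrict (\<lambda>j. S j w) VV, restrict (\<lambda>e. R (fst e) (snd e) w) DE)"

definition "Dom = (PiE VV (\<lambda>_. {0..<p})) \<times> (PiE DE (\<lambda>_. {0..<p}))"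
definition "Cset = (PiE VV (\<lambda>_. UNIV :: nat set)) \<times> (PiE DE (\<lambda>_. UNIV :: nat set))"

definition "ps j a = prob (S j -` {a} \<inter> space M)"
definition "wt d = (\<Prod>j\<in>VV. ps j (fst d j)) / real p ^ card DE"

lemma finite_Dom: "finite Dom"
  unfolding Dom_def using finite_DE by (auto intro!: finite_PiE)

lemma countable_Cset: "countable Cset"
  unfolding Cset_def using finite_DE by (auto intro!: countable_PiE)

lemma Dom_Cset: "Dom \<subseteq> Cset"
  unfolding Dom_def Cset_def by (auto simp: PiE_def Pi_def)

lemma cfg_Cset: "cfg w \<in> Cset"
  unfolding cfg_def Cset_def by auto

lemma cfg_vimage:
  assumes d: "d \<in> Cset"
  shows "cfg -` {d} \<inter> space M =
    (\<Inter>x\<in>Inl ` VV \<union> Inr ` DE. case_sum S (\<lambda>(j, k). R j k) x -`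
        (case x of Inl j \<Rightarrow> {fst d j} | Inr e \<Rightarrow> {snd d e}) \<inter> space M)"
proof -
  obtain s r where d': "d = (s, r)" by (cases d)
  have s: "s \<in> extensional VV" and r: "r \<in> extensional DE" using d d' unfolding Cset_def by (auto simp: PiE_def)
  show ?thesis
  proof (intro set_eqI iffI)
    fix w assume "w \<in> cfg -` {d} \<inter> space M"
    then have w: "w \<in> space M" "restrict (\<lambda>j. S j w) VV = s" "restrict (\<lambda>e. R (fst e) (snd e) w) DE = r"
      unfolding cfg_def d' by auto
    show "w \<in> (\<Inter>x\<in>Inl ` VV \<union> Inr ` DE. case_sum S (\<lambda>(j, k). R j k) x -`
        (case x of Inl j \<Rightarrow> {fst d j} | Inr e \<Rightarrow> {snd d e}) \<inter> space M)"
      using w unfolding d' by (auto simp: restrict_def fun_eq_iff split: if_splits)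
  next
    fix w assume w: "w \<in> (\<Inter>x\<in>Inl ` VV \<union> Inr ` DE. case_sum S (\<lambda>(j, k). R j k) x -`
        (case x of Inl j \<Rightarrow> {fst d j} | Inr e \<Rightarrow> {snd d e}) \<inter> space M)"
    have ws: "w \<in> space M" using w n_pos by auto
    have "restrict (\<lambda>j. S j w) VV = s"
    proof
      fix j show "restrict (\<lambda>j. S j w) VV j = s j"
      proof (cases "j \<in> VV")
        case True then have "Inl j \<in> Inl ` VV \<union> Inr ` DE" by auto
        from INT_D[OF w this] have "S j w = fst d j" by simp
        then show ?thesis using True d' by simp
      qed (use s in \<open>auto simp: extensional_def\<close>)
    qed
    moreover have "restrict (\<lambda>e. R (fst e) (snd e) w) DE = r"
    proof
      fix e show "restrict (\<lambda>e. R (fst e) (snd e) w) DE e = r e"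
      proof (cases "e \<in> DE")
        case True then have "Inr e \<in> Inl ` VV \<union> Inr ` DE" by auto
        from INT_D[OF w this] have "R (fst e) (snd e) w = snd d e" by (simp split: prod.splits)
        then show ?thesis using True d' by simp
      next
        case False then show ?thesis using extensional_arb[OF r False] by simp
      qed
    qed
    ultimately show "w \<in> cfg -` {d} \<inter> space M" using ws unfolding cfg_def d' by simp
  qed
qed

lemma meas_cfg_point: "d \<in> Cset \<Longrightarrow> cfg -` {d} \<inter> space M \<in> sets M"
proof -
  assume d: "d \<in> Cset"
  have fin: "finite (Inl ` VV \<union> Inr ` DE :: (nat + nat \<times> nat) set)" using finite_DE by simp
  have "(\<Inter>x\<in>Inl ` VV \<union> Inr ` DE. case_sum S (\<lambda>(j, k). R j k) x -`
        (case x of Inl j \<Rightarrow> {fst d j} | Inr e \<Rightarrow> {snd d e}) \<inter> space M) \<in> sets M"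
  proof (rule sets.finite_INT[OF fin])
    fix x :: "nat + nat \<times> nat" assume "x \<in> Inl ` VV \<union> Inr ` DE"
    then show "case_sum S (\<lambda>(j, k). R j k) x -` (case x of Inl j \<Rightarrow> {fst d j} | Inr e \<Rightarrow> {snd d e}) \<inter> space M \<in> sets M"
      by (auto simp: meas_S meas_R)
  qed (use n_pos in auto)
  then show ?thesis using cfg_vimage[OF d] by simp
qed

lemma cfg_measurable: "cfg \<in> measurable M (count_space Cset)"
  using countable_Cset cfg_Cset meas_cfg_point by (subst measurable_count_space_eq_countable) auto

lemma meas_cfg_event: "{w \<in> space M. Q (cfg w)} \<in> sets M"
proof -
  have "{w \<in> space M. Q (cfg w)} = cfg -` {d\<in>Cset. Q d} \<inter> space M" using cfg_Cset by auto
  then show ?thesis using measurable_sets[OF cfg_measurable, of "{d\<in>Cset. Q d}"] by simp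
qed

lemma prob_cfg_point:
  assumes d: "d \<in> Dom"
  shows "prob (cfg -` {d} \<inter> space M) = wt d"
proof -
  let ?X = "case_sum S (\<lambda>(j, k). R j k)"
  let ?A = "\<lambda>x. case x of Inl j \<Rightarrow> {fst d j} | Inr e \<Rightarrow> {snd d e}"
  have fin: "finite (Inl ` VV \<union> Inr ` DE :: (nat + nat \<times> nat) set)" using finite_DE by simp
  have "prob (cfg -` {d} \<inter> space M) = prob (\<Inter>x\<in>Inl ` VV \<union> Inr ` DE. ?X x -` ?A x \<inter> space M)"
    using d Dom_Cset by (subst cfg_vimage) auto
  also have "\<dots> = (\<Prod>x\<in>Inl ` VV \<union> Inr ` DE. prob (?X x -` ?A x \<inter> space M))"
    using indep unfolding index_eq
    by (rule indep_varsD) (use n_pos fin in auto)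
  also have "\<dots> = (\<Prod>x\<in>Inl ` VV. prob (?X x -` ?A x \<inter> space M)) * (\<Prod>x\<in>Inr ` DE. prob (?X x -` ?A x \<inter> space M))"
    using fin by (intro prod.union_disjoint) auto
  also have "(\<Prod>x\<in>Inl ` VV. prob (?X x -` ?A x \<inter> space M)) = (\<Prod>j\<in>VV. ps j (fst d j))"
    by (subst prod.reindex) (auto simp: ps_def inj_on_def)
  also have "(\<Prod>x\<in>Inr ` DE. prob (?X x -` ?A x \<inter> space M)) = (\<Prod>e\<in>DE. 1 / real p)"
  proof -
    have "(\<Prod>x\<in>Inr ` DE. prob (?X x -` ?A x \<inter> space M)) = (\<Prod>e\<in>DE. prob (?X (Inr e) -` ?A (Inr e) \<inter> space M))"
      by (subst prod.reindex) (simp_all add: inj_on_def)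
    also have "\<dots> = (\<Prod>e\<in>DE. 1 / real p)"
    proof (rule prod.cong[OF refl])
      fix e assume e: "e \<in> DE"
      obtain j k where jk: "e = (j, k)" by (cases e)
      have "snd d e < p" using d e unfolding Dom_def by (auto simp: PiE_iff)
      then show "prob (?X (Inr e) -` ?A (Inr e) \<inter> space M) = 1 / real p"
        using prob_R[of j k "{snd d e}"] e jk by simp
    qed
    finally show ?thesis .
  qed
  finally show ?thesis unfolding wt_def by (simp add: power_one_over divide_inverse power_inverse)
qed

lemma AE_cfg_Dom: "AE w in M. cfg w \<in> Dom"
proof -
  have N: "(\<Union>e\<in>DE. R (fst e) (snd e) -` {p..} \<inter> space M) \<in> null_sets M"
  proof (rule null_sets_UN')
    show "countable DE" using finite_DE by (rule countable_finite)
    fix e assume e: "e \<in> DE"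
    obtain j k where jk: "e = (j, k)" by (cases e)
    have "{0..<p} \<inter> {p..} = {}" by auto
    then have "prob (R j k -` {p..} \<inter> space M) = 0" using prob_R[of j k "{p..}"] e jk by simp
    then show "R (fst e) (snd e) -` {p..} \<inter> space M \<in> null_sets M"
      using meas_R[of j k] e jk by (simp add: null_sets_def emeasure_eq_measure)
  qed
  show ?thesis
  proof (rule AE_I'[OF N], safe)
    fix w assume w: "w \<in> space M" and nd: "cfg w \<notin> Dom"
    have "fst (cfg w) \<in> PiE VV (\<lambda>_. {0..<p})" using S_lt_p w unfolding cfg_def by auto
    with nd have "snd (cfg w) \<notin> PiE DE (\<lambda>_. {0..<p})" unfolding Dom_def by (cases "cfg w") auto
    then obtain e where e: "e \<in> DE" "\<not> R (fst e) (snd e) w < p"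
      unfolding cfg_def by (auto simp: PiE_iff)
    then show "w \<in> (\<Union>e\<in>DE. R (fst e) (snd e) -` {p..} \<inter> space M)" using w by (intro UN_I[of e]) auto
  qed
qed

lemma prob_cfg_event:
  "prob {w \<in> space M. Q (cfg w)} = (\<Sum>d\<in>{d\<in>Dom. Q d}. wt d)"
proof -
  have "prob {w \<in> space M. Q (cfg w)} = measure M (\<Union>d\<in>{d\<in>Dom. Q d}. cfg -` {d} \<inter> space M)"
  proof (rule finite_measure_eq_AE)
    show "AE w in M. (w \<in> {w \<in> space M. Q (cfg w)}) = (w \<in> (\<Union>d\<in>{d\<in>Dom. Q d}. cfg -` {d} \<inter> space M))"
      using AE_cfg_Dom by eventually_elim auto
    show "(\<Union>d\<in>{d\<in>Dom. Q d}. cfg -` {d} \<inter> space M) \<in> sets M"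
      using finite_Dom Dom_Cset meas_cfg_point by (intro sets.finite_UN) auto
  qed (rule meas_cfg_event)
  also have "\<dots> = (\<Sum>d\<in>{d\<in>Dom. Q d}. prob (cfg -` {d} \<inter> space M))"
    using finite_Dom Dom_Cset meas_cfg_point
    by (intro measure_finite_Union) (auto simp: disjoint_family_on_def emeasure_eq_measure)
  also have "\<dots> = (\<Sum>d\<in>{d\<in>Dom. Q d}. wt d)"
    by (intro sum.cong refl) (simp add: prob_cfg_point)
  finally show ?thesis .
qed

end

context thm_setting begin

abbreviation "Vh \<equiv> VV - Vc"
definition "Dh = {(j, k). (j, k) \<in> DE \<and> j \<in> Vh \<and> k \<in> Vh}"
definition "Dc = DE - Dh"
definition "hcomp j = honest_component E Vh j"

lemma adj_honest: "adj (honest_edges E Vh) = Dh"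
proof (intro set_eqI iffI)
  fix x assume "x \<in> adj (honest_edges E Vh)"
  then obtain j k where x: "x = (j, k)" "{j, k} \<in> E" "{j, k} \<subseteq> Vh"
    unfolding adj_def honest_edges_def by auto
  then show "x \<in> Dh" unfolding Dh_def adj_def by auto
next
  fix x assume "x \<in> Dh"
  then obtain j k where x: "x = (j, k)" "{j, k} \<in> E" "j \<in> Vh" "k \<in> Vh"
    unfolding Dh_def adj_def by auto
  then show "x \<in> adj (honest_edges E Vh)" unfolding adj_def honest_edges_def by auto
qed

lemma Dc_eq: "{(j, k). {j, k} \<in> E - honest_edges E Vh} = Dc"
proof -
  have "{(j, k). {j, k} \<in> E - honest_edges E Vh} = adj E - adj (honest_edges E Vh)"
    unfolding adj_def honest_edges_def by auto
  then show ?thesis unfolding adj_honest Dc_def by simp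
qed

lemma Dh_sub: "Dh \<subseteq> DE" unfolding Dh_def by auto
lemma Dh_sym: "(j, k) \<in> Dh \<Longrightarrow> (k, j) \<in> Dh" unfolding Dh_def using DE_sym by auto
lemma Dh_Vh: "(j, k) \<in> Dh \<Longrightarrow> j \<in> Vh \<and> k \<in> Vh" unfolding Dh_def by auto
lemma finite_Dh: "finite Dh" using finite_DE Dh_sub by (rule finite_subset[rotated])
lemma finite_Dc: "finite Dc" using finite_DE unfolding Dc_def by simp
lemma Dh_nbrs: "j \<in> Vh \<Longrightarrow> k \<in> nbrs E j \<inter> Vh \<longleftrightarrow> (j, k) \<in> Dh"
  unfolding Dh_def using nbrs_DE DE_sub by auto

lemma comp_eq: "hcomp j = {k. (j, k) \<in> Dh\<^sup>*}"
  unfolding hcomp_def honest_component_def adj_honest by simp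

lemma comp_refl: "j \<in> hcomp j" unfolding comp_eq by simp

lemma Dh_rtrancl_sym: "(j, k) \<in> Dh\<^sup>* \<Longrightarrow> (k, j) \<in> Dh\<^sup>*"
proof (induction rule: rtrancl_induct)
  case (step y z)
  then show ?case using Dh_sym by (meson converse_rtrancl_into_rtrancl)
qed simp

lemma comp_sym: "k \<in> hcomp j \<Longrightarrow> j \<in> hcomp k"
  unfolding comp_eq using Dh_rtrancl_sym by auto

lemma comp_same: "k \<in> hcomp j \<Longrightarrow> hcomp k = hcomp j"
  unfolding comp_eq using Dh_rtrancl_sym by (auto intro: rtrancl_trans)

lemma comp_step: "(j, k) \<in> Dh \<Longrightarrow> k \<in> hcomp j"
  unfolding comp_eq by auto

lemma comp_Vh: "j \<in> Vh \<Longrightarrow> hcomp j \<subseteq> Vh"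
proof
  fix k assume j: "j \<in> Vh" and "k \<in> hcomp j"
  then have "(j, k) \<in> Dh\<^sup>*" unfolding comp_eq by simp
  then show "k \<in> Vh" using j by (induction rule: rtrancl_induct) (auto dest: Dh_Vh)
qed

lemma finite_comp: "j \<in> Vh \<Longrightarrow> finite (hcomp j)"
  using comp_Vh by (rule finite_subset) auto

definition Li :: "(nat \<times> nat \<Rightarrow> int) \<Rightarrow> nat \<Rightarrow> int" where
  "Li r j = (\<Sum>k\<in>nbrs E j \<inter> Vh. r (k, j) - r (j, k))"

lemma sum_Li_comp:
  assumes j0: "j0 \<in> Vh"
  shows "(\<Sum>j\<in>hcomp j0. Li r j) = 0"
proof -
  let ?C = "hcomp j0"
  let ?P = "SIGMA j:?C. nbrs E j \<inter> Vh"
  have finC: "finite ?C" using finite_comp[OF j0] .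
  have finP: "finite ?P" using finC finite_nbrs by auto
  have "(\<Sum>j\<in>?C. Li r j) = (\<Sum>j\<in>?C. \<Sum>k\<in>nbrs E j \<inter> Vh. r (k, j)) - (\<Sum>j\<in>?C. \<Sum>k\<in>nbrs E j \<inter> Vh. r (j, k))"
    unfolding Li_def by (simp add: sum_subtractf)
  also have "(\<Sum>j\<in>?C. \<Sum>k\<in>nbrs E j \<inter> Vh. r (k, j)) = (\<Sum>x\<in>?P. r (snd x, fst x))"
    using finC finite_nbrs by (subst sum.Sigma) (auto simp: split_beta)
  also have "(\<Sum>j\<in>?C. \<Sum>k\<in>nbrs E j \<inter> Vh. r (j, k)) = (\<Sum>x\<in>?P. r x)"
    using finC finite_nbrs by (subst sum.Sigma) auto
  also have "(\<Sum>x\<in>?P. r (snd x, fst x)) = (\<Sum>x\<in>?P. r x)"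
  proof -
    have symP: "(c, a) \<in> ?P" if ac: "(a, c) \<in> ?P" for a c
    proof -
      have a: "a \<in> ?C" and c: "c \<in> nbrs E a \<inter> Vh" using ac by auto
      have aV: "a \<in> Vh" using a comp_Vh[OF j0] by auto
      have "(a, c) \<in> Dh" using Dh_nbrs[OF aV] c by simp
      then have ca: "(c, a) \<in> Dh" by (rule Dh_sym)
      have "c \<in> ?C" using comp_step[OF \<open>(a, c) \<in> Dh\<close>] comp_same[OF a] by simp
      moreover have "c \<in> Vh" using ca Dh_Vh by blast
      ultimately show ?thesis using Dh_nbrs[of c a] ca by blast
    qed
    have symP2: "(snd x, fst x) \<in> ?P" if "x \<in> ?P" for x
      using symP[of "fst x" "snd x"] that by simp
    have symP': "c \<in> ?C \<and> a \<in> nbrs E c \<and> a \<in> VV \<and> a \<notin> Vc"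
      if "a \<in> ?C" "c \<in> nbrs E a" "c \<in> VV" "c \<notin> Vc" for a c
      using symP[of a c] that by auto
    show ?thesis
      by (rule sum.reindex_bij_witness[of _ "\<lambda>x. (snd x, fst x)" "\<lambda>x. (snd x, fst x)"])
         (simp_all only: fst_conv snd_conv prod.collapse symP2)
  qed
  finally show ?thesis by simp
qed

end

context thm_setting begin

lemma Li_add: "Li (\<lambda>x. f x + g x) j = Li f j + Li g j"
  unfolding Li_def sum.distrib[symmetric] by (rule sum.cong) auto

lemma Li_scale: "Li (\<lambda>x. c * f x) j = c * Li f j"
  unfolding Li_def by (simp add: sum_distrib_left algebra_simps)

lemma Li_zero: "Li (\<lambda>x. 0) j = 0"
  unfolding Li_def by simp

lemma Li_sum: "Li (\<lambda>x. \<Sum>a\<in>A. f a x) j = (\<Sum>a\<in>A. Li (f a) j)"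
  unfolding Li_def by (simp add: sum_subtractf[symmetric] sum.swap[of _ A])

lemma Li_cong:
  assumes j: "j \<in> Vh" and fg: "\<And>e. e \<in> Dh \<Longrightarrow> [f e = g e] (mod int p)"
  shows "[Li f j = Li g j] (mod int p)"
  unfolding Li_def
proof (rule cong_sum, rule cong_diff)
  fix k assume k: "k \<in> nbrs E j \<inter> Vh"
  then have "(j, k) \<in> Dh" using Dh_nbrs[OF j] by simp
  then show "[f (k, j) = g (k, j)] (mod int p)" "[f (j, k) = g (j, k)] (mod int p)"
    using fg Dh_sym by auto
qed

definition delta :: "nat \<times> nat \<Rightarrow> nat \<times> nat \<Rightarrow> int" where
  "delta e = (\<lambda>x. if x = e then 1 else 0)"

lemma Li_delta:
  assumes kj: "(k, j) \<in> Dh" and u: "u \<in> Vh"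
  shows "Li (delta (k, j)) u = (if u = j then 1 else 0) - (if u = k then 1 else 0)"
proof -
  have kj': "(j, k) \<in> Dh" using Dh_sym[OF kj] .
  have A: "(\<Sum>k'\<in>nbrs E u \<inter> Vh. delta (k, j) (k', u)) = (if u = j then 1 else 0)"
  proof (cases "u = j")
    case True
    then have "k \<in> nbrs E u \<inter> Vh" using Dh_nbrs[OF u] kj' by simp
    then show ?thesis using True unfolding delta_def by (simp add: finite_nbrs)
  qed (simp add: delta_def)
  have B: "(\<Sum>k'\<in>nbrs E u \<inter> Vh. delta (k, j) (u, k')) = (if u = k then 1 else 0)"
  proof (cases "u = k")
    case True
    then have "j \<in> nbrs E u \<inter> Vh" using Dh_nbrs[OF u] kj by simp
    then show ?thesis using True unfolding delta_def by (simp add: finite_nbrs)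
  qed (simp add: delta_def)
  show ?thesis by (simp only: Li_def sum_subtractf A B)
qed

lemma path_flow:
  assumes j: "j \<in> Vh" and k: "k \<in> hcomp j"
  shows "\<exists>r. \<forall>u\<in>Vh. Li r u = (if u = k then 1 else 0) - (if u = j then 1 else 0)"
proof -
  have "(j, k) \<in> Dh\<^sup>*" using k unfolding comp_eq by simp
  then show ?thesis
  proof (induction rule: rtrancl_induct)
    case base
    show ?case by (rule exI[of _ "\<lambda>x. 0"]) (simp add: Li_zero)
  next
    case (step y z)
    from step.IH obtain r where r: "\<forall>u\<in>Vh. Li r u = (if u = y then 1 else 0) - (if u = j then 1 else 0)" by blast
    show ?case
    proof (rule exI[of _ "\<lambda>x. r x + delta (y, z) x"], intro ballI)
      fix u assume u: "u \<in> Vh"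
      show "Li (\<lambda>x. r x + delta (y, z) x) u = (if u = z then 1 else 0) - (if u = j then 1 else 0)"
        using r u Li_delta[OF step.hyps(2) u] by (simp add: Li_add)
    qed
  qed
qed

definition "rt j = Min (hcomp j)"

lemma rt_in: "j \<in> Vh \<Longrightarrow> rt j \<in> hcomp j"
  unfolding rt_def using finite_comp comp_refl by (intro Min_in) auto

lemma sum_rt:
  assumes t: "\<forall>j\<in>Vh. [(\<Sum>k\<in>hcomp j. t k) = 0] (mod int p)"
  shows "[(\<Sum>j\<in>{j\<in>Vh. rt j = u}. t j) = 0] (mod int p)"
proof (cases "{j\<in>Vh. rt j = u} = {}")
  case True then show ?thesis unfolding True by simp
next
  case False
  then obtain j0 where j0: "j0 \<in> Vh" "rt j0 = u" by auto
  have "{j\<in>Vh. rt j = u} = hcomp j0"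
  proof (intro set_eqI iffI)
    fix j assume "j \<in> {j\<in>Vh. rt j = u}"
    then have j: "j \<in> Vh" "rt j = rt j0" using j0 by auto
    have "hcomp j = hcomp (rt j)" using comp_same[OF rt_in[OF j(1)]] by simp
    also have "\<dots> = hcomp j0" using j(2) comp_same[OF rt_in[OF j0(1)]] by simp
    finally show "j \<in> hcomp j0" using comp_refl by auto
  next
    fix j assume j: "j \<in> hcomp j0"
    then have "j \<in> Vh" using comp_Vh[OF j0(1)] by auto
    moreover have "rt j = rt j0" unfolding rt_def using comp_same[OF j] by simp
    ultimately show "j \<in> {j\<in>Vh. rt j = u}" using j0 by simp
  qed
  then show ?thesis using t j0 by simp
qed

lemma flow_exists:
  assumes t: "\<forall>j\<in>Vh. [(\<Sum>k\<in>hcomp j. t k) = 0] (mod int p)"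
  shows "\<exists>r0. \<forall>u\<in>Vh. [Li r0 u = t u] (mod int p)"
proof -
  have "\<forall>j\<in>Vh. \<exists>r. \<forall>u\<in>Vh. Li r u = (if u = j then 1 else 0) - (if u = rt j then 1 else 0)"
  proof
    fix j assume j: "j \<in> Vh"
    have "rt j \<in> Vh" using rt_in[OF j] comp_Vh[OF j] by auto
    moreover have "j \<in> hcomp (rt j)" using comp_sym[OF rt_in[OF j]] .
    ultimately show "\<exists>r. \<forall>u\<in>Vh. Li r u = (if u = j then 1 else 0) - (if u = rt j then 1 else 0)"
      by (rule path_flow)
  qed
  from bchoice[OF this] obtain rr where rr0: "\<forall>j\<in>Vh. \<forall>u\<in>Vh. Li (rr j) u = (if u = j then 1 else 0) - (if u = rt j then 1 else 0)"
    ..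
  have rr: "\<And>j u. j \<in> Vh \<Longrightarrow> u \<in> Vh \<Longrightarrow> Li (rr j) u = (if u = j then 1 else 0) - (if u = rt j then 1 else 0)"
    using rr0 by blast
  define r0 where "r0 = (\<lambda>x. \<Sum>j\<in>Vh. t j * rr j x)"
  show ?thesis
  proof (rule exI[of _ r0], intro ballI)
    fix u assume u: "u \<in> Vh"
    have "Li r0 u = (\<Sum>j\<in>Vh. t j * Li (rr j) u)"
      unfolding r0_def by (simp add: Li_sum Li_scale)
    also have "\<dots> = (\<Sum>j\<in>Vh. t j * (if u = j then 1 else 0) - t j * (if u = rt j then 1 else 0))"
      using rr u by (intro sum.cong refl) (simp add: right_diff_distrib)
    also have "\<dots> = (\<Sum>j\<in>Vh. t j * (if u = j then 1 else 0)) - (\<Sum>j\<in>Vh. t j * (if u = rt j then 1 else 0))"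
      by (rule sum_subtractf)
    also have "(\<Sum>j\<in>Vh. t j * (if u = j then 1 else 0)) = (\<Sum>j\<in>Vh. if u = j then t j else 0)"
      by (rule sum.cong) auto
    also have "\<dots> = t u"
      using u by (simp add: sum.delta)
    also have "(\<Sum>j\<in>Vh. t j * (if u = rt j then 1 else 0)) = (\<Sum>j\<in>Vh. if rt j = u then t j else 0)"
      by (rule sum.cong) auto
    also have "\<dots> = (\<Sum>j\<in>{j\<in>Vh. rt j = u}. t j)"
      by (rule sum.inter_filter[symmetric]) simp
    finally have eq: "Li r0 u = t u - (\<Sum>j\<in>{j\<in>Vh. rt j = u}. t j)" .
    have "[t u - (\<Sum>j\<in>{j\<in>Vh. rt j = u}. t j) = t u - 0] (mod int p)"
      by (rule cong_diff[OF cong_refl sum_rt[OF t]])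
    then show "[Li r0 u = t u] (mod int p)"
      unfolding eq by simp
  qed
qed

end

context thm_setting begin

lemma Li_diff: "Li (\<lambda>x. f x - g x) j = Li f j - Li g j"
  unfolding Li_def sum_subtractf[symmetric] by (rule sum.cong) auto

definition "RH = PiE Dh (\<lambda>_. {0..<p})"
definition "sol t = {rh \<in> RH. \<forall>j\<in>Vh. [Li (\<lambda>e. int (rh e)) j = t j] (mod int p)}"

lemma sol_empty:
  assumes "\<not> (\<forall>j\<in>Vh. [(\<Sum>k\<in>hcomp j. t k) = 0] (mod int p))"
  shows "sol t = {}"
proof (rule ccontr)
  assume "sol t \<noteq> {}"
  then obtain rh where rh: "\<forall>j\<in>Vh. [Li (\<lambda>e. int (rh e)) j = t j] (mod int p)"
    unfolding sol_def by auto
  from assms obtain j where j: "j \<in> Vh" and nc: "\<not> [(\<Sum>k\<in>hcomp j. t k) = 0] (mod int p)" by blast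
  have "[(\<Sum>k\<in>hcomp j. Li (\<lambda>e. int (rh e)) k) = (\<Sum>k\<in>hcomp j. t k)] (mod int p)"
    using rh comp_Vh[OF j] by (intro cong_sum) auto
  then have "[(\<Sum>k\<in>hcomp j. t k) = 0] (mod int p)"
    using sum_Li_comp[OF j] by (simp add: cong_sym_eq)
  with nc show False by simp
qed

lemma mod_nat_lt: "nat (x mod int p) < p"
  using p_pos by (simp add: nat_less_iff)

lemma int_nat_mod: "int (nat (x mod int p)) = x mod int p"
  using p_pos by simp

lemma sol_card:
  assumes cond: "\<forall>j\<in>Vh. [(\<Sum>k\<in>hcomp j. t k) = 0] (mod int p)"
  shows "card (sol t) = card (sol (\<lambda>_. 0))"
proof -
  obtain r0 where r0: "\<forall>u\<in>Vh. [Li r0 u = t u] (mod int p)" using flow_exists[OF cond] by blast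
  define F where "F = (\<lambda>rh. restrict (\<lambda>e. nat ((int (rh e) + r0 e) mod int p)) Dh)"
  define G where "G = (\<lambda>rh. restrict (\<lambda>e. nat ((int (rh e) - r0 e) mod int p)) Dh)"
  have FR: "F rh \<in> RH" for rh unfolding F_def RH_def using mod_nat_lt by auto
  have GR: "G rh \<in> RH" for rh unfolding G_def RH_def using mod_nat_lt by auto
  have LF: "[Li (\<lambda>e. int (F rh e)) j = Li (\<lambda>e. int (rh e)) j + Li r0 j] (mod int p)" if j: "j \<in> Vh" for rh j
  proof -
    have "[Li (\<lambda>e. int (F rh e)) j = Li (\<lambda>e. int (rh e) + r0 e) j] (mod int p)"
      using j by (rule Li_cong) (simp add: F_def cong_def p_pos)
    then show ?thesis by (simp add: Li_add)
  qed
  have LG: "[Li (\<lambda>e. int (G rh e)) j = Li (\<lambda>e. int (rh e)) j - Li r0 j] (mod int p)" if j: "j \<in> Vh" for rh j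
  proof -
    have "[Li (\<lambda>e. int (G rh e)) j = Li (\<lambda>e. int (rh e) - r0 e) j] (mod int p)"
      using j by (rule Li_cong) (simp add: G_def cong_def p_pos)
    then show ?thesis by (simp only: Li_diff)
  qed
  have GF: "G (F rh) = rh" if "rh \<in> RH" for rh
  proof
    fix e show "G (F rh) e = rh e"
    proof (cases "e \<in> Dh")
      case True
      then have "rh e < p" using that unfolding RH_def by auto
      then show ?thesis using True unfolding F_def G_def by (simp add: int_nat_mod mod_diff_left_eq)
    next
      case False
      have "rh \<in> extensional Dh" using that unfolding RH_def by (simp add: PiE_iff)
      then show ?thesis using extensional_arb[OF \<open>rh \<in> extensional Dh\<close> False] False unfolding G_def by simp
    qed
  qed
  have FG: "F (G rh) = rh" if "rh \<in> RH" for rh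
  proof
    fix e show "F (G rh) e = rh e"
    proof (cases "e \<in> Dh")
      case True
      then have "rh e < p" using that unfolding RH_def by auto
      then show ?thesis using True unfolding F_def G_def by (simp add: int_nat_mod mod_add_left_eq)
    next
      case False
      have "rh \<in> extensional Dh" using that unfolding RH_def by (simp add: PiE_iff)
      then show ?thesis using extensional_arb[OF \<open>rh \<in> extensional Dh\<close> False] False unfolding F_def by simp
    qed
  qed
  have "bij_betw F (sol (\<lambda>_. 0)) (sol t)"
  proof (rule bij_betw_byWitness[where f' = G])
    show "\<forall>a\<in>sol (\<lambda>_. 0). G (F a) = a" using GF unfolding sol_def by auto
    show "\<forall>a'\<in>sol t. F (G a') = a'" using FG unfolding sol_def by auto
    show "F ` sol (\<lambda>_. 0) \<subseteq> sol t"
    proof safe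
      fix rh assume "rh \<in> sol (\<lambda>_. 0)"
      then have rh: "\<forall>j\<in>Vh. [Li (\<lambda>e. int (rh e)) j = 0] (mod int p)" unfolding sol_def by auto
      have "[Li (\<lambda>e. int (F rh e)) j = t j] (mod int p)" if j: "j \<in> Vh" for j
      proof -
        have "[Li (\<lambda>e. int (rh e)) j + Li r0 j = 0 + t j] (mod int p)"
          using rh r0 j by (intro cong_add) auto
        then show ?thesis using cong_trans[OF LF[OF j]] by simp
      qed
      then show "F rh \<in> sol t" unfolding sol_def using FR by auto
    qed
    show "G ` sol t \<subseteq> sol (\<lambda>_. 0)"
    proof safe
      fix rh assume "rh \<in> sol t"
      then have rh: "\<forall>j\<in>Vh. [Li (\<lambda>e. int (rh e)) j = t j] (mod int p)" unfolding sol_def by auto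
      have "[Li (\<lambda>e. int (G rh e)) j = 0] (mod int p)" if j: "j \<in> Vh" for j
      proof -
        have "[Li (\<lambda>e. int (rh e)) j - Li r0 j = t j - t j] (mod int p)"
          using rh r0 j by (intro cong_diff) auto
        then show ?thesis using cong_trans[OF LG[OF j]] by simp
      qed
      then show "G rh \<in> sol (\<lambda>_. 0)" unfolding sol_def using GR by auto
    qed
  qed
  then show ?thesis by (simp add: bij_betw_same_card)
qed

lemma sol_count:
  "card (sol t) = (if \<forall>j\<in>Vh. [(\<Sum>k\<in>hcomp j. t k) = 0] (mod int p) then card (sol (\<lambda>_. 0)) else 0)"
proof (cases "\<forall>j\<in>Vh. [(\<Sum>k\<in>hcomp j. t k) = 0] (mod int p)")
  case True
  have "card (sol t) = card (sol (\<lambda>_. 0))" by (rule sol_card[OF True])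
  then show ?thesis by (simp only: if_P[OF True])
next
  case False
  then show ?thesis using sol_empty[OF False] by (simp only: if_not_P[OF False] card.empty if_False)
qed

end

context thm_setting begin

lemma pdmm_z_local:
  assumes ss: "\<forall>k\<in>VV. s k = s' k"
  shows "u \<in> VV \<Longrightarrow> v \<in> VV \<Longrightarrow> pdmm_z E c \<theta> s t u v = pdmm_z E c \<theta> s' t u v"
proof (induction t arbitrary: u v)
  case 0 then show ?case by simp
next
  case (Suc t)
  have nb: "\<And>k. k \<in> nbrs E v \<Longrightarrow> k \<in> VV" using nbrs_sub by blast
  have sum_eq: "(\<Sum>k\<in>nbrs E v. Bsign v k * pdmm_z E c \<theta> s t v k) = (\<Sum>k\<in>nbrs E v. Bsign v k * pdmm_z E c \<theta> s' t v k)"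
    using Suc.IH Suc.prems nb by (intro sum.cong) auto
  show ?case using Suc.IH[of u v] Suc.IH[of v u] Suc.prems ss sum_eq by simp
qed

lemma pdmm_x_local:
  assumes ss: "\<forall>k\<in>VV. s k = s' k" and u: "u \<in> VV"
  shows "pdmm_x E c \<theta> s t u = pdmm_x E c \<theta> s' t u"
proof -
  have "(\<Sum>j\<in>nbrs E u. Bsign u j * pdmm_z E c \<theta> s t u j) = (\<Sum>j\<in>nbrs E u. Bsign u j * pdmm_z E c \<theta> s' t u j)"
  proof (rule sum.cong[OF refl])
    fix j assume "j \<in> nbrs E u"
    then have "j \<in> VV" using nbrs_sub by blast
    then show "Bsign u j * pdmm_z E c \<theta> s t u j = Bsign u j * pdmm_z E c \<theta> s' t u j"
      using pdmm_z_local[OF ss u] by simp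
  qed
  moreover have "s u = s' u" using ss u by blast
  ultimately show ?thesis unfolding pdmm_x_def by simp
qed

lemma pdmm_x_0: "pdmm_x E c \<theta> s 0 a = s a / (1 + c * real (card (nbrs E a)))"
  unfolding pdmm_x_def by simp

lemma masked_local:
  assumes "S1 j x1 = S2 j x2"
    and "\<And>k. k \<in> nbrs E j \<Longrightarrow> R1 j k x1 = R2 j k x2 \<and> R1 k j x1 = R2 k j x2"
  shows "masked_input E p S1 R1 j x1 = masked_input E p S2 R2 j x2"
  unfolding masked_input_def self_share_def using assms by (simp cong: sum.cong)

definition Sf :: "(nat \<Rightarrow> nat) \<times> (nat \<times> nat \<Rightarrow> nat) \<Rightarrow> nat \<Rightarrow> unit \<Rightarrow> nat" where
  "Sf d = (\<lambda>j _. fst d j)"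
definition Rf :: "(nat \<Rightarrow> nat) \<times> (nat \<times> nat \<Rightarrow> nat) \<Rightarrow> nat \<Rightarrow> nat \<Rightarrow> unit \<Rightarrow> nat" where
  "Rf d = (\<lambda>j k _. snd d (j, k))"
definition "Mk d j = masked_input E p (Sf d) (Rf d) j ()"
definition "flow r j = (\<Sum>k\<in>nbrs E j. int (r (k, j)) - int (r (j, k)))"
definition "cp r j = (\<Sum>k\<in>nbrs E j \<inter> Vc. int (r (k, j)) - int (r (j, k)))"

lemma Mk_cong: "[Mk d j = int (fst d j) + flow (snd d) j] (mod int p)"
proof -
  have "Mk d j = ((int (fst d j) - (\<Sum>k\<in>nbrs E j. int (snd d (j, k)))) mod int p
                 + (\<Sum>k\<in>nbrs E j. int (snd d (k, j)))) mod int p"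
    unfolding Mk_def masked_input_def self_share_def Sf_def Rf_def by simp
  also have "[\<dots> = (int (fst d j) - (\<Sum>k\<in>nbrs E j. int (snd d (j, k))))
                 + (\<Sum>k\<in>nbrs E j. int (snd d (k, j)))] (mod int p)"
    by (simp add: cong_def mod_add_left_eq)
  also have "(int (fst d j) - (\<Sum>k\<in>nbrs E j. int (snd d (j, k)))) + (\<Sum>k\<in>nbrs E j. int (snd d (k, j)))
      = int (fst d j) + flow (snd d) j"
    unfolding flow_def by (simp add: sum_subtractf)
  finally show ?thesis .
qed

lemma Mk_range: "0 \<le> Mk d j" "Mk d j < int p"
  unfolding Mk_def masked_input_def using p_pos by auto

lemma flow_split:
  assumes j: "j \<in> Vh"
  shows "flow r j = Li (\<lambda>e. int (r e)) j + cp r j"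
proof -
  have "nbrs E j = (nbrs E j \<inter> Vh) \<union> (nbrs E j \<inter> Vc)" using nbrs_sub by auto
  then have "flow r j = (\<Sum>k\<in>(nbrs E j \<inter> Vh) \<union> (nbrs E j \<inter> Vc). int (r (k, j)) - int (r (j, k)))"
    unfolding flow_def by simp
  also have "\<dots> = (\<Sum>k\<in>nbrs E j \<inter> Vh. int (r (k, j)) - int (r (j, k))) + (\<Sum>k\<in>nbrs E j \<inter> Vc. int (r (k, j)) - int (r (j, k)))"
    using finite_nbrs by (intro sum.union_disjoint) auto
  finally show ?thesis unfolding Li_def cp_def .
qed

end

locale thm_setting2 = thm_setting +
  fixes c \<theta> :: real and i :: nat
  assumes c_pos: "c > 0" and i_h: "i \<in> VV - Vc"
begin

definition "Phi d = adversary_view n E Vc p c \<theta> (Sf d) (Rf d) ()"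
definition "W d = (restrict (fst d) Vc, restrict (snd d) Dc, restrict (Mk d) VV)"

lemma view_cfg:
  assumes w: "w \<in> space M"
  shows "adversary_view n E Vc p c \<theta> S R w = Phi (cfg w)"
proof -
  have m: "masked_input E p S R j w = Mk (cfg w) j" if j: "j \<in> VV" for j
    unfolding Mk_def
  proof (rule masked_local)
    show "S j w = Sf (cfg w) j ()" using j unfolding Sf_def cfg_def by simp
    fix k assume k: "k \<in> nbrs E j"
    then have "(j, k) \<in> DE" "(k, j) \<in> DE" using nbrs_DE DE_sym by auto
    then show "R j k w = Rf (cfg w) j k () \<and> R k j w = Rf (cfg w) k j ()"
      unfolding Rf_def cfg_def by simp
  qed
  have c1: "restrict (\<lambda>j. S j w) Vc = restrict (\<lambda>j. Sf (cfg w) j ()) Vc"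
    using Vc_sub unfolding Sf_def cfg_def by (auto simp: restrict_def fun_eq_iff)
  have Dc_DE: "Dc \<subseteq> DE" unfolding Dc_def by auto
  have c2: "restrict (\<lambda>(j, k). R j k w) {(j, k). {j, k} \<in> E - honest_edges E Vh} =
            restrict (\<lambda>(j, k). Rf (cfg w) j k ()) {(j, k). {j, k} \<in> E - honest_edges E Vh}"
    unfolding Dc_eq using Dc_DE unfolding Rf_def cfg_def by (auto simp: restrict_def fun_eq_iff)
  have hm: "\<forall>k\<in>VV. real_of_int (masked_input E p S R k w) = real_of_int (masked_input E p (Sf (cfg w)) (Rf (cfg w)) k ())"
    using m unfolding Mk_def by simp
  have c3: "(\<lambda>t. restrict (pdmm_x E c \<theta> (\<lambda>i. real_of_int (masked_input E p S R i w)) t) VV) =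
            (\<lambda>t. restrict (pdmm_x E c \<theta> (\<lambda>i. real_of_int (masked_input E p (Sf (cfg w)) (Rf (cfg w)) i ())) t) VV)"
  proof (intro ext)
    fix t a
    show "restrict (pdmm_x E c \<theta> (\<lambda>i. real_of_int (masked_input E p S R i w)) t) VV a =
          restrict (pdmm_x E c \<theta> (\<lambda>i. real_of_int (masked_input E p (Sf (cfg w)) (Rf (cfg w)) i ())) t) VV a"
      using pdmm_x_local[OF hm] by (simp add: restrict_def)
  qed
  show ?thesis unfolding Phi_def adversary_view_def using c1 c2 c3 by simp
qed

lemma Phi_eq_iff: "Phi d = Phi d' \<longleftrightarrow> W d = W d'"
proof
  assume eq: "Phi d = Phi d'"
  then have e1: "restrict (\<lambda>j. Sf d j ()) Vc = restrict (\<lambda>j. Sf d' j ()) Vc"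
    and e2: "restrict (\<lambda>(j, k). Rf d j k ()) Dc = restrict (\<lambda>(j, k). Rf d' j k ()) Dc"
    and e3: "(\<lambda>t. restrict (pdmm_x E c \<theta> (\<lambda>i. real_of_int (Mk d i)) t) VV) =
             (\<lambda>t. restrict (pdmm_x E c \<theta> (\<lambda>i. real_of_int (Mk d' i)) t) VV)"
    unfolding Phi_def adversary_view_def Dc_eq Mk_def by simp_all
  have w1: "restrict (fst d) Vc = restrict (fst d') Vc"
    using e1 unfolding Sf_def by simp
  have w2: "restrict (snd d) Dc = restrict (snd d') Dc"
  proof
    fix e show "restrict (snd d) Dc e = restrict (snd d') Dc e"
      using fun_cong[OF e2, of e] unfolding Rf_def by (cases e) (simp add: restrict_def)
  qed
  have w3: "restrict (Mk d) VV = restrict (Mk d') VV"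
  proof
    fix a show "restrict (Mk d) VV a = restrict (Mk d') VV a"
    proof (cases "a \<in> VV")
      case True
      have pos: "1 + c * real (card (nbrs E a)) > 0" using c_pos by (simp add: add_pos_nonneg)
      have "real_of_int (Mk d a) / (1 + c * real (card (nbrs E a))) = real_of_int (Mk d' a) / (1 + c * real (card (nbrs E a)))"
        using fun_cong[OF fun_cong[OF e3, of 0], of a] True by (simp add: pdmm_x_0)
      then show ?thesis using True pos by simp
    qed auto
  qed
  show "W d = W d'" unfolding W_def using w1 w2 w3 by simp
next
  assume "W d = W d'"
  then have w1: "restrict (fst d) Vc = restrict (fst d') Vc"
    and w2: "restrict (snd d) Dc = restrict (snd d') Dc"
    and w3: "restrict (Mk d) VV = restrict (Mk d') VV" unfolding W_def by simp_all
  have c1: "restrict (\<lambda>j. Sf d j ()) Vc = restrict (\<lambda>j. Sf d' j ()) Vc"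
    using w1 unfolding Sf_def by simp
  have c2: "restrict (\<lambda>(j, k). Rf d j k ()) Dc = restrict (\<lambda>(j, k). Rf d' j k ()) Dc"
  proof
    fix e show "restrict (\<lambda>(j, k). Rf d j k ()) Dc e = restrict (\<lambda>(j, k). Rf d' j k ()) Dc e"
      using fun_cong[OF w2, of e] unfolding Rf_def by (cases e) (simp add: restrict_def)
  qed
  have c3: "(\<lambda>t. restrict (pdmm_x E c \<theta> (\<lambda>i. real_of_int (Mk d i)) t) VV) =
             (\<lambda>t. restrict (pdmm_x E c \<theta> (\<lambda>i. real_of_int (Mk d' i)) t) VV)"
  proof (intro ext)
    fix t a
    have hm: "\<forall>k\<in>VV. real_of_int (Mk d k) = real_of_int (Mk d' k)"
      using w3 by (metis restrict_apply')
    then show "restrict (pdmm_x E c \<theta> (\<lambda>i. real_of_int (Mk d i)) t) VV a =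
               restrict (pdmm_x E c \<theta> (\<lambda>i. real_of_int (Mk d' i)) t) VV a"
      using pdmm_x_local[OF hm] by (simp add: restrict_def)
  qed
  show "Phi d = Phi d'"
    unfolding Phi_def adversary_view_def Dc_eq using c1 c2 c3 unfolding Mk_def by simp
qed

end

context thm_setting2 begin

abbreviation "C0 \<equiv> hcomp i"

lemma C0_Vh: "C0 \<subseteq> Vh" using comp_Vh i_h by simp
lemma finite_C0: "finite C0" using finite_comp i_h by simp

definition "zW d = nat ((\<Sum>j\<in>C0. Mk d j - cp (snd d) j) mod int p)"

lemma zW_eq: "zW d = (\<Sum>j\<in>C0. fst d j) mod p"
proof -
  have "[(\<Sum>j\<in>C0. Mk d j - cp (snd d) j) = (\<Sum>j\<in>C0. int (fst d j) + flow (snd d) j - cp (snd d) j)] (mod int p)"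
    by (intro cong_sum cong_diff Mk_cong cong_refl)
  also have "(\<Sum>j\<in>C0. int (fst d j) + flow (snd d) j - cp (snd d) j) = (\<Sum>j\<in>C0. int (fst d j) + Li (\<lambda>e. int (snd d e)) j)"
    using C0_Vh by (intro sum.cong refl) (auto simp: flow_split)
  also have "\<dots> = int (\<Sum>j\<in>C0. fst d j)"
    using sum_Li_comp[OF i_h] by (simp add: sum.distrib)
  finally have "(\<Sum>j\<in>C0. Mk d j - cp (snd d) j) mod int p = int ((\<Sum>j\<in>C0. fst d j) mod p)"
    by (simp add: cong_def zmod_int)
  then show ?thesis unfolding zW_def by simp
qed

lemma zW_W:
  assumes eq: "W d = W d'"
  shows "zW d = zW d'"
proof -
  from eq have w2: "restrict (snd d) Dc = restrict (snd d') Dc"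
    and w3: "restrict (Mk d) VV = restrict (Mk d') VV" unfolding W_def by simp_all
  have "Mk d j - cp (snd d) j = Mk d' j - cp (snd d') j" if j: "j \<in> C0" for j
  proof -
    have jV: "j \<in> Vh" using j C0_Vh by auto
    have "Mk d j = Mk d' j" using w3 jV by (metis Diff_iff restrict_apply')
    moreover have "cp (snd d) j = cp (snd d') j"
      unfolding cp_def
    proof (rule sum.cong[OF refl])
      fix k assume k: "k \<in> nbrs E j \<inter> Vc"
      then have "(j, k) \<in> DE" "(k, j) \<in> DE" using nbrs_DE DE_sym by auto
      then have "(j, k) \<in> Dc" "(k, j) \<in> Dc" using k unfolding Dc_def Dh_def by auto
      then show "int (snd d (k, j)) - int (snd d (j, k)) = int (snd d' (k, j)) - int (snd d' (j, k))"
        using w2 by (metis restrict_apply')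
    qed
    ultimately show ?thesis by simp
  qed
  then show ?thesis unfolding zW_def by (simp cong: sum.cong)
qed

definition "gV v = zW (SOME d. Phi d = v)"

lemma gV_Phi: "gV (Phi d) = zW d"
proof -
  have "Phi (SOME d'. Phi d' = Phi d) = Phi d" by (rule someI) simp
  then show ?thesis unfolding gV_def using zW_W Phi_eq_iff by blast
qed

lemma Z_g:
  assumes w: "w \<in> space M"
  shows "(\<Sum>j\<in>C0. S j w) = gV (adversary_view n E Vc p c \<theta> S R w)"
proof -
  have C0V: "C0 \<subseteq> VV" using C0_Vh by auto
  have "(\<Sum>j\<in>C0. S j w) \<le> (\<Sum>j\<in>VV. S j w)" using C0V by (intro sum_mono2) auto
  then have lt: "(\<Sum>j\<in>C0. S j w) < p" using p_large w by fastforce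
  have "gV (adversary_view n E Vc p c \<theta> S R w) = zW (cfg w)" using view_cfg[OF w] gV_Phi by simp
  also have "\<dots> = (\<Sum>j\<in>C0. fst (cfg w) j) mod p" by (rule zW_eq)
  also have "(\<Sum>j\<in>C0. fst (cfg w) j) = (\<Sum>j\<in>C0. S j w)" using C0V unfolding cfg_def by (intro sum.cong) auto
  finally show ?thesis using lt by simp
qed

end

lemma sum_PiE_split:
  fixes f g :: "('a \<Rightarrow> 'b) \<Rightarrow> real"
  assumes fin: "finite A" "finite B" and disj: "A \<inter> B = {}" and finX: "\<And>x. finite (X x)"
  shows "(\<Sum>s\<in>PiE (A \<union> B) X. f (restrict s A) * g (restrict s B)) =
         (\<Sum>s\<in>PiE A X. f s) * (\<Sum>s\<in>PiE B X. g s)"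
proof -
  have "(\<Sum>s\<in>PiE A X. f s) * (\<Sum>s\<in>PiE B X. g s) = (\<Sum>ab\<in>PiE A X \<times> PiE B X. f (fst ab) * g (snd ab))"
    by (simp add: sum_product sum.cartesian_product split_beta)
  also have "\<dots> = (\<Sum>s\<in>PiE (A \<union> B) X. f (restrict s A) * g (restrict s B))"
  proof (rule sum.reindex_bij_witness[of _ "\<lambda>s. (restrict s A, restrict s B)"
        "\<lambda>ab. restrict (\<lambda>x. if x \<in> A then fst ab x else snd ab x) (A \<union> B)"])
    fix ab assume ab: "ab \<in> PiE A X \<times> PiE B X"
    obtain a b where ab': "ab = (a, b)" by (cases ab)
    have a: "a \<in> PiE A X" and b: "b \<in> PiE B X" using ab ab' by auto
    have ra: "restrict (restrict (\<lambda>x. if x \<in> A then a x else b x) (A \<union> B)) A = a"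
    proof
      fix x show "restrict (restrict (\<lambda>x. if x \<in> A then a x else b x) (A \<union> B)) A x = a x"
        using a by (cases "x \<in> A") (auto simp: PiE_def extensional_def)
    qed
    have rb: "restrict (restrict (\<lambda>x. if x \<in> A then a x else b x) (A \<union> B)) B = b"
    proof
      fix x show "restrict (restrict (\<lambda>x. if x \<in> A then a x else b x) (A \<union> B)) B x = b x"
        using b disj by (cases "x \<in> B") (auto simp: PiE_def extensional_def)
    qed
    show "(restrict (restrict (\<lambda>x. if x \<in> A then fst ab x else snd ab x) (A \<union> B)) A,
           restrict (restrict (\<lambda>x. if x \<in> A then fst ab x else snd ab x) (A \<union> B)) B) = ab"
      unfolding ab' fst_conv snd_conv using ra rb by simp
    show "restrict (\<lambda>x. if x \<in> A then fst ab x else snd ab x) (A \<union> B) \<in> PiE (A \<union> B) X"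
      using a b ab' by (auto simp: PiE_def Pi_def)
    show "f (restrict (restrict (\<lambda>x. if x \<in> A then fst ab x else snd ab x) (A \<union> B)) A) *
          g (restrict (restrict (\<lambda>x. if x \<in> A then fst ab x else snd ab x) (A \<union> B)) B) =
          f (fst ab) * g (snd ab)"
      unfolding ab' fst_conv snd_conv using ra rb by simp
  next
    fix s assume s: "s \<in> PiE (A \<union> B) X"
    show "restrict (\<lambda>x. if x \<in> A then fst (restrict s A, restrict s B) x else snd (restrict s A, restrict s B) x) (A \<union> B) = s"
    proof
      fix x show "restrict (\<lambda>x. if x \<in> A then fst (restrict s A, restrict s B) x else snd (restrict s A, restrict s B) x) (A \<union> B) x = s x"
        using s by (cases "x \<in> A \<union> B") (auto simp: PiE_def extensional_def)
    qed
    show "(restrict s A, restrict s B) \<in> PiE A X \<times> PiE B X" using s by auto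
  qed
  finally show ?thesis by simp
qed

lemma sum_filter_prod:
  fixes f :: "'a \<Rightarrow> real"
  assumes A: "finite A" and B: "finite B"
  shows "(\<Sum>d\<in>{d\<in>A \<times> B. P d}. f (fst d)) = (\<Sum>a\<in>A. f a * real (card {b\<in>B. P (a, b)}))"
proof -
  have "{d\<in>A \<times> B. P d} = Sigma A (\<lambda>a. {b\<in>B. P (a, b)})" by auto
  moreover have "(\<Sum>a\<in>A. \<Sum>b\<in>{b\<in>B. P (a, b)}. f a) = (\<Sum>d\<in>Sigma A (\<lambda>a. {b\<in>B. P (a, b)}). f (fst d))"
    using A B by (subst sum.Sigma) (auto simp: split_beta)
  ultimately have "(\<Sum>d\<in>{d\<in>A \<times> B. P d}. f (fst d)) = (\<Sum>a\<in>A. \<Sum>b\<in>{b\<in>B. P (a, b)}. f a)"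
    by simp
  then show ?thesis by (simp add: mult.commute)
qed


context thm_setting2 begin

definition "PS = PiE VV (\<lambda>_. {0..<p})"
definition "PR = PiE DE (\<lambda>_. {0..<p})"
definition "tt d0 s k = Mk d0 k - cp (snd d0) k - int (s k)"

lemma Dom_PS_PR: "Dom = PS \<times> PR" unfolding Dom_def PS_def PR_def ..

lemma cp_Dc:
  assumes j: "j \<in> Vh" and r: "restrict r Dc = restrict r' Dc"
  shows "cp r j = cp r' j"
  unfolding cp_def
proof (rule sum.cong[OF refl])
  fix k assume k: "k \<in> nbrs E j \<inter> Vc"
  then have "(j, k) \<in> DE" "(k, j) \<in> DE" using nbrs_DE DE_sym by auto
  then have "(j, k) \<in> Dc" "(k, j) \<in> Dc" using k unfolding Dc_def Dh_def by auto
  then show "int (r (k, j)) - int (r (j, k)) = int (r' (k, j)) - int (r' (j, k))"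
    using r by (metis restrict_apply')
qed

lemma Mk_Vc:
  assumes j: "j \<in> Vc" and s: "restrict s Vc = restrict s' Vc" and r: "restrict r Dc = restrict r' Dc"
  shows "Mk (s, r) j = Mk (s', r') j"
  unfolding Mk_def
proof (rule masked_local)
  show "Sf (s, r) j () = Sf (s', r') j ()" using s j unfolding Sf_def by (metis fst_conv restrict_apply')
  fix k assume k: "k \<in> nbrs E j"
  then have "(j, k) \<in> DE" "(k, j) \<in> DE" using nbrs_DE DE_sym by auto
  then have "(j, k) \<in> Dc" "(k, j) \<in> Dc" using j unfolding Dc_def Dh_def by auto
  then show "Rf (s, r) j k () = Rf (s', r') j k () \<and> Rf (s, r) k j () = Rf (s', r') k j ()"
    using r unfolding Rf_def by (metis snd_conv restrict_apply')
qed

lemma Mk_Vh: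
  assumes j: "j \<in> Vh" and r: "restrict r Dc = restrict (snd d0) Dc"
  shows "Mk (s, r) j = Mk d0 j \<longleftrightarrow> [Li (\<lambda>e. int (r e)) j = tt d0 s j] (mod int p)"
proof -
  have c1: "[Mk (s, r) j = int (s j) + Li (\<lambda>e. int (r e)) j + cp (snd d0) j] (mod int p)"
    using Mk_cong[of "(s, r)" j] flow_split[OF j, of r] cp_Dc[OF j r] by (simp add: add.assoc)
  have "Mk (s, r) j = Mk d0 j \<longleftrightarrow> [Mk (s, r) j = Mk d0 j] (mod int p)"
    using Mk_range[of "(s, r)" j] Mk_range[of d0 j] by (simp add: cong_def)
  also have "\<dots> \<longleftrightarrow> [int (s j) + Li (\<lambda>e. int (r e)) j + cp (snd d0) j = Mk d0 j] (mod int p)"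
    using c1 by (meson cong_sym cong_trans)
  also have "\<dots> \<longleftrightarrow> [Li (\<lambda>e. int (r e)) j = tt d0 s j] (mod int p)"
    unfolding cong_iff_dvd_diff tt_def by (simp add: algebra_simps)
  finally show ?thesis .
qed

lemma char_W:
  assumes s: "restrict s Vc = restrict (fst d0) Vc"
  shows "W (s, r) = W d0 \<longleftrightarrow> restrict r Dc = restrict (snd d0) Dc \<and>
           (\<forall>j\<in>Vh. [Li (\<lambda>e. int (r e)) j = tt d0 s j] (mod int p))"
proof
  assume eq: "W (s, r) = W d0"
  then have r: "restrict r Dc = restrict (snd d0) Dc" and m: "restrict (Mk (s, r)) VV = restrict (Mk d0) VV"
    unfolding W_def by simp_all
  have "[Li (\<lambda>e. int (r e)) j = tt d0 s j] (mod int p)" if j: "j \<in> Vh" for j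
  proof -
    have "Mk (s, r) j = Mk d0 j" using m j by (metis Diff_iff restrict_apply')
    then show ?thesis using Mk_Vh[OF j r] by simp
  qed
  then show "restrict r Dc = restrict (snd d0) Dc \<and> (\<forall>j\<in>Vh. [Li (\<lambda>e. int (r e)) j = tt d0 s j] (mod int p))"
    using r by simp
next
  assume h: "restrict r Dc = restrict (snd d0) Dc \<and> (\<forall>j\<in>Vh. [Li (\<lambda>e. int (r e)) j = tt d0 s j] (mod int p))"
  then have r: "restrict r Dc = restrict (snd d0) Dc" by simp
  have "restrict (Mk (s, r)) VV = restrict (Mk d0) VV"
  proof
    fix j show "restrict (Mk (s, r)) VV j = restrict (Mk d0) VV j"
    proof (cases "j \<in> VV")
      case True
      show ?thesis
      proof (cases "j \<in> Vc")
        case True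
        have "Mk (s, r) j = Mk (fst d0, snd d0) j" by (rule Mk_Vc[OF True s r])
        then show ?thesis using \<open>j \<in> VV\<close> by simp
      next
        case False
        then have jh: "j \<in> Vh" using True by simp
        then have "Mk (s, r) j = Mk d0 j" using Mk_Vh[OF jh r] h by blast
        then show ?thesis using True by simp
      qed
    next
      case False
      then show ?thesis by (simp only: restrict_apply if_False)
    qed
  qed
  then show "W (s, r) = W d0" unfolding W_def using s r by simp
qed

lemma Li_restrict:
  assumes j: "j \<in> Vh"
  shows "Li (\<lambda>e. int (restrict r Dh e)) j = Li (\<lambda>e. int (r e)) j"
  unfolding Li_def
proof (rule sum.cong[OF refl])
  fix k assume "k \<in> nbrs E j \<inter> Vh"
  then have "(j, k) \<in> Dh" "(k, j) \<in> Dh" using Dh_nbrs[OF j] Dh_sym by auto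
  then show "int (restrict r Dh (k, j)) - int (restrict r Dh (j, k)) = int (r (k, j)) - int (r (j, k))" by simp
qed

lemma count_W:
  assumes d0: "d0 \<in> Dom"
  shows "card {r\<in>PR. W (s, r) = W d0} =
    (if restrict s Vc = restrict (fst d0) Vc \<and> (\<forall>j\<in>Vh. [(\<Sum>k\<in>hcomp j. tt d0 s k) = 0] (mod int p))
     then card (sol (\<lambda>_. 0)) else 0)"
proof (cases "restrict s Vc = restrict (fst d0) Vc")
  case False
  then have "{r\<in>PR. W (s, r) = W d0} = {}" unfolding W_def by auto
  then have "card {r\<in>PR. W (s, r) = W d0} = 0" by (simp only: card.empty)
  with False show ?thesis by (simp only: if_False simp_thms)
next
  case True
  have r0: "snd d0 \<in> PR" using d0 unfolding Dom_PS_PR by auto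
  have set_eq: "{r\<in>PR. W (s, r) = W d0} = {r\<in>PR. restrict r Dc = restrict (snd d0) Dc \<and>
           (\<forall>j\<in>Vh. [Li (\<lambda>e. int (r e)) j = tt d0 s j] (mod int p))}"
    using char_W[OF True] by auto
  define mg where "mg = (\<lambda>rh. restrict (\<lambda>e. if e \<in> Dh then rh e else snd d0 e) DE)"
  have bij: "bij_betw (\<lambda>r. restrict r Dh) {r\<in>PR. restrict r Dc = restrict (snd d0) Dc \<and>
           (\<forall>j\<in>Vh. [Li (\<lambda>e. int (r e)) j = tt d0 s j] (mod int p))} (sol (tt d0 s))"
  proof (rule bij_betw_byWitness[where f'=mg])
    show "\<forall>a\<in>{r\<in>PR. restrict r Dc = restrict (snd d0) Dc \<and>
           (\<forall>j\<in>Vh. [Li (\<lambda>e. int (r e)) j = tt d0 s j] (mod int p))}. mg (restrict a Dh) = a"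
    proof safe
      fix r assume r: "r \<in> PR" and rc: "restrict r Dc = restrict (snd d0) Dc"
      show "mg (restrict r Dh) = r"
      proof
        fix e show "mg (restrict r Dh) e = r e"
        proof (cases "e \<in> DE")
          case True
          show ?thesis
          proof (cases "e \<in> Dh")
            case False
            then have "e \<in> Dc" using True unfolding Dc_def by simp
            then have "r e = snd d0 e" using rc by (metis restrict_apply')
            then show ?thesis using True False unfolding mg_def by simp
          qed (simp add: mg_def Dh_sub[THEN subsetD])
        next
          case False
          have "r \<in> extensional DE" using r unfolding PR_def by (simp add: PiE_iff)
          then show ?thesis using extensional_arb[OF \<open>r \<in> extensional DE\<close> False] False unfolding mg_def by (simp only: restrict_apply if_False)
        qed
      qed
    qed
    show "\<forall>a'\<in>sol (tt d0 s). restrict (mg a') Dh = a'"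
    proof
      fix rh assume "rh \<in> sol (tt d0 s)"
      then have "rh \<in> extensional Dh" unfolding sol_def RH_def by (simp add: PiE_iff)
      then show "restrict (mg rh) Dh = rh"
        unfolding mg_def using Dh_sub by (auto simp: restrict_def extensional_def fun_eq_iff)
    qed
    show "(\<lambda>r. restrict r Dh) ` {r\<in>PR. restrict r Dc = restrict (snd d0) Dc \<and>
           (\<forall>j\<in>Vh. [Li (\<lambda>e. int (r e)) j = tt d0 s j] (mod int p))} \<subseteq> sol (tt d0 s)"
    proof safe
      fix r assume r: "r \<in> PR" and h: "\<forall>j\<in>Vh. [Li (\<lambda>e. int (r e)) j = tt d0 s j] (mod int p)"
      have "restrict r Dh \<in> RH" using r Dh_sub unfolding PR_def RH_def by (auto simp: PiE_iff)
      then show "restrict r Dh \<in> sol (tt d0 s)" unfolding sol_def using h Li_restrict by simp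
    qed
    show "mg ` sol (tt d0 s) \<subseteq> {r\<in>PR. restrict r Dc = restrict (snd d0) Dc \<and>
           (\<forall>j\<in>Vh. [Li (\<lambda>e. int (r e)) j = tt d0 s j] (mod int p))}"
    proof
      fix x assume "x \<in> mg ` sol (tt d0 s)"
      then obtain rh where rh: "rh \<in> sol (tt d0 s)" and x: "x = mg rh" by blast
      then have rhR: "rh \<in> RH" and h: "\<forall>j\<in>Vh. [Li (\<lambda>e. int (rh e)) j = tt d0 s j] (mod int p)"
        unfolding sol_def by auto
      have A: "mg rh \<in> PR" using rhR r0 unfolding mg_def PR_def RH_def by (auto simp: PiE_iff)
      have B: "restrict (mg rh) Dc = restrict (snd d0) Dc"
        unfolding mg_def Dc_def by (auto simp: restrict_def fun_eq_iff)
      have "restrict (mg rh) Dh = rh"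
        using rhR Dh_sub unfolding mg_def RH_def by (auto simp: restrict_def PiE_iff extensional_def fun_eq_iff)
      then have C: "\<forall>j\<in>Vh. [Li (\<lambda>e. int (mg rh e)) j = tt d0 s j] (mod int p)"
        using h Li_restrict[of _ "mg rh"] by simp
      show "x \<in> {r\<in>PR. restrict r Dc = restrict (snd d0) Dc \<and>
           (\<forall>j\<in>Vh. [Li (\<lambda>e. int (r e)) j = tt d0 s j] (mod int p))}"
        using A B C x by blast
    qed
  qed
  have "card {r\<in>PR. W (s, r) = W d0} = card (sol (tt d0 s))"
    unfolding set_eq using bij by (rule bij_betw_same_card)
  also have "\<dots> = (if \<forall>j\<in>Vh. [(\<Sum>k\<in>hcomp j. tt d0 s k) = 0] (mod int p) then card (sol (\<lambda>_. 0)) else 0)"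
    by (rule sol_count)
  finally show ?thesis using True by simp
qed

end

context thm_setting2 begin

lemma i_C0: "i \<in> C0" by (rule comp_refl)

lemma C0_VV: "C0 \<subseteq> VV" using C0_Vh by auto

lemma Vc_rest: "Vc \<subseteq> VV - C0" using Vc_sub C0_Vh by auto

lemma comp_disj:
  assumes j: "j \<in> Vh" "j \<notin> C0"
  shows "hcomp j \<inter> C0 = {}"
proof (rule ccontr)
  assume "hcomp j \<inter> C0 \<noteq> {}"
  then obtain k where k: "k \<in> hcomp j" "k \<in> C0" by blast
  then have "hcomp j = C0" using comp_same by metis
  then show False using j comp_refl by metis
qed

lemma C0_part:
  "[(\<Sum>k\<in>C0. tt d0 s k) = 0] (mod int p) \<longleftrightarrow> (\<Sum>j\<in>C0. s j) mod p = zW d0"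
proof -
  define X where "X = (\<Sum>j\<in>C0. Mk d0 j - cp (snd d0) j)"
  define Y where "Y = (\<Sum>j\<in>C0. s j)"
  have "(\<Sum>k\<in>C0. tt d0 s k) = X - int Y"
    unfolding tt_def X_def Y_def by (simp add: sum_subtractf)
  then have "[(\<Sum>k\<in>C0. tt d0 s k) = 0] (mod int p) \<longleftrightarrow> X mod int p = int Y mod int p"
    by (simp add: cong_iff_dvd_diff mod_eq_dvd_iff)
  also have "int Y mod int p = int (Y mod p)" by (simp add: zmod_int)
  also have "X mod int p = int (Y mod p) \<longleftrightarrow> nat (X mod int p) = Y mod p"
    using p_pos by (auto simp: nat_eq_iff)
  finally show ?thesis unfolding zW_def X_def[symmetric] Y_def[symmetric] by (simp add: eq_commute)
qed

lemma cond_split: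
  "(\<forall>j\<in>Vh. [(\<Sum>k\<in>hcomp j. tt d0 s k) = 0] (mod int p)) \<longleftrightarrow>
   ((\<Sum>j\<in>C0. s j) mod p = zW d0 \<and>
    (\<forall>j\<in>Vh - C0. [(\<Sum>k\<in>hcomp j. tt d0 (restrict s (VV - C0)) k) = 0] (mod int p)))"
proof -
  have rest: "(\<Sum>k\<in>hcomp j. tt d0 (restrict s (VV - C0)) k) = (\<Sum>k\<in>hcomp j. tt d0 s k)"
    if j: "j \<in> Vh" "j \<notin> C0" for j
  proof (rule sum.cong[OF refl])
    fix k assume k: "k \<in> hcomp j"
    then have "k \<in> VV - C0" using comp_disj[OF j] comp_Vh[OF j(1)] by auto
    then show "tt d0 (restrict s (VV - C0)) k = tt d0 s k" unfolding tt_def by simp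
  qed
  have inC0: "hcomp j = C0" if "j \<in> C0" for j using comp_same[OF that] .
  show ?thesis
  proof
    assume h: "\<forall>j\<in>Vh. [(\<Sum>k\<in>hcomp j. tt d0 s k) = 0] (mod int p)"
    have "[(\<Sum>k\<in>C0. tt d0 s k) = 0] (mod int p)" using h i_h by blast
    then have "(\<Sum>j\<in>C0. s j) mod p = zW d0" using C0_part by blast
    moreover have "\<forall>j\<in>Vh - C0. [(\<Sum>k\<in>hcomp j. tt d0 (restrict s (VV - C0)) k) = 0] (mod int p)"
      using h rest by simp
    ultimately show "(\<Sum>j\<in>C0. s j) mod p = zW d0 \<and>
      (\<forall>j\<in>Vh - C0. [(\<Sum>k\<in>hcomp j. tt d0 (restrict s (VV - C0)) k) = 0] (mod int p))" by blast
  next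
    assume h: "(\<Sum>j\<in>C0. s j) mod p = zW d0 \<and>
      (\<forall>j\<in>Vh - C0. [(\<Sum>k\<in>hcomp j. tt d0 (restrict s (VV - C0)) k) = 0] (mod int p))"
    show "\<forall>j\<in>Vh. [(\<Sum>k\<in>hcomp j. tt d0 s k) = 0] (mod int p)"
    proof
      fix j assume j: "j \<in> Vh"
      show "[(\<Sum>k\<in>hcomp j. tt d0 s k) = 0] (mod int p)"
      proof (cases "j \<in> C0")
        case True
        then show ?thesis using h C0_part inC0[OF True] by simp
      next
        case False
        then have jj: "j \<in> Vh - C0" using j by blast
        then have "[(\<Sum>k\<in>hcomp j. tt d0 (restrict s (VV - C0)) k) = 0] (mod int p)" using h by blast
        then show ?thesis using rest[OF j False] by simp
      qed
    qed
  qed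
qed

end

context thm_setting2 begin

abbreviation "K0 \<equiv> card (sol (\<lambda>_. 0))"
abbreviation "DD \<equiv> real p ^ card DE"

definition "wS s = (\<Prod>j\<in>VV. ps j (s j))"

definition "GQ Q z = (\<Sum>s1\<in>PiE C0 (\<lambda>_. {0..<p}).
    if Q (s1 i) \<and> (\<Sum>j\<in>C0. s1 j) mod p = z then \<Prod>j\<in>C0. ps j (s1 j) else 0)"

definition "F2 d0 s2 = (if restrict s2 Vc = restrict (fst d0) Vc \<and>
      (\<forall>j\<in>Vh - C0. [(\<Sum>k\<in>hcomp j. tt d0 s2 k) = 0] (mod int p))
    then \<Prod>j\<in>VV - C0. ps j (s2 j) else 0) * real K0 / DD"

definition "alpha d0 = (\<Sum>s2\<in>PiE (VV - C0) (\<lambda>_. {0..<p}). F2 d0 s2)"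
definition "beta = (\<Sum>s2\<in>PiE (VV - C0) (\<lambda>_. {0..<p}). \<Prod>j\<in>VV - C0. ps j (s2 j))"

lemma wt_fst: "wt d = wS (fst d) / DD" unfolding wt_def wS_def ..

lemma wS_split: "wS s = (\<Prod>j\<in>C0. ps j (s j)) * (\<Prod>j\<in>VV - C0. ps j (s j))"
  unfolding wS_def using prod.subset_diff[OF C0_VV, of "\<lambda>j. ps j (s j)"] by (simp add: mult.commute)

lemma VV_split: "VV = C0 \<union> (VV - C0)" using C0_VV by auto

lemma finite_PR: "finite PR" unfolding PR_def using finite_DE by (intro finite_PiE) auto
lemma finite_PS: "finite PS" unfolding PS_def by (intro finite_PiE) auto
lemma card_PR: "card PR = p ^ card DE" unfolding PR_def using finite_DE by (simp add: card_PiE)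

lemma sumA:
  assumes d0: "d0 \<in> Dom"
  shows "(\<Sum>d\<in>{d\<in>Dom. Q (fst d i) \<and> W d = W d0}. wt d) = alpha d0 * GQ Q (zW d0)"
proof -
  define F1 where "F1 = (\<lambda>s1. if Q (s1 i) \<and> (\<Sum>j\<in>C0. s1 j) mod p = zW d0 then \<Prod>j\<in>C0. ps j (s1 j) else (0::real))"
  have "(\<Sum>d\<in>{d\<in>Dom. Q (fst d i) \<and> W d = W d0}. wt d) =
        (\<Sum>d\<in>{d\<in>PS \<times> PR. Q (fst d i) \<and> W (fst d, snd d) = W d0}. wS (fst d) / DD)"
    unfolding Dom_PS_PR wt_fst by simp
  also have "\<dots> = (\<Sum>s\<in>PS. wS s / DD * real (card {r\<in>PR. Q (fst (s, r) i) \<and> W (fst (s, r), snd (s, r)) = W d0}))"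
    by (rule sum_filter_prod[OF finite_PS finite_PR])
  also have "\<dots> = (\<Sum>s\<in>PS. F1 (restrict s C0) * F2 d0 (restrict s (VV - C0)))"
  proof (rule sum.cong[OF refl])
    fix s assume s: "s \<in> PS"
    have cardQ: "card {r\<in>PR. Q (s i) \<and> W (s, r) = W d0} = (if Q (s i) then card {r\<in>PR. W (s, r) = W d0} else 0)"
      by simp
    have r1: "restrict (restrict s (VV - C0)) Vc = restrict s Vc"
      using Vc_rest by (auto simp: restrict_def fun_eq_iff)
    have f1: "F1 (restrict s C0) = (if Q (s i) \<and> (\<Sum>j\<in>C0. s j) mod p = zW d0 then \<Prod>j\<in>C0. ps j (s j) else 0)"
      unfolding F1_def using i_C0 by simp
    have f2: "F2 d0 (restrict s (VV - C0)) = (if restrict s Vc = restrict (fst d0) Vc \<and>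
      (\<forall>j\<in>Vh - C0. [(\<Sum>k\<in>hcomp j. tt d0 (restrict s (VV - C0)) k) = 0] (mod int p))
      then \<Prod>j\<in>VV - C0. ps j (s j) else 0) * real K0 / DD"
      unfolding F2_def r1 by simp
    show "wS s / DD * real (card {r\<in>PR. Q (fst (s, r) i) \<and> W (fst (s, r), snd (s, r)) = W d0}) =
          F1 (restrict s C0) * F2 d0 (restrict s (VV - C0))"
      unfolding f1 f2 using cardQ count_W[OF d0, of s] cond_split[of d0 s] wS_split[of s]
      by (auto simp: algebra_simps)
  qed
  also have "\<dots> = (\<Sum>s1\<in>PiE C0 (\<lambda>_. {0..<p}). F1 s1) * (\<Sum>s2\<in>PiE (VV - C0) (\<lambda>_. {0..<p}). F2 d0 s2)"
    unfolding PS_def by (subst VV_split, rule sum_PiE_split) (use finite_C0 in auto)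
  finally show ?thesis unfolding alpha_def GQ_def F1_def by (simp add: mult.commute)
qed

lemma sumB:
  "(\<Sum>d\<in>{d\<in>Dom. Q (fst d i) \<and> (\<Sum>j\<in>C0. fst d j) mod p = z}. wt d) = beta * GQ Q z"
proof -
  define F1 where "F1 = (\<lambda>s1. if Q (s1 i) \<and> (\<Sum>j\<in>C0. s1 j) mod p = z then \<Prod>j\<in>C0. ps j (s1 j) else (0::real))"
  have DD0: "DD \<noteq> 0" using p_pos by simp
  have "(\<Sum>d\<in>{d\<in>Dom. Q (fst d i) \<and> (\<Sum>j\<in>C0. fst d j) mod p = z}. wt d) =
        (\<Sum>d\<in>{d\<in>PS \<times> PR. Q (fst d i) \<and> (\<Sum>j\<in>C0. fst d j) mod p = z}. wS (fst d) / DD)"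
    unfolding Dom_PS_PR wt_fst by simp
  also have "\<dots> = (\<Sum>s\<in>PS. wS s / DD * real (card {r\<in>PR. Q (fst (s, r) i) \<and> (\<Sum>j\<in>C0. fst (s, r) j) mod p = z}))"
    by (rule sum_filter_prod[OF finite_PS finite_PR])
  also have "\<dots> = (\<Sum>s\<in>PS. F1 (restrict s C0) * (\<Prod>j\<in>VV - C0. ps j (restrict s (VV - C0) j)))"
  proof (rule sum.cong[OF refl])
    fix s assume s: "s \<in> PS"
    have cardQ: "card {r\<in>PR. Q (s i) \<and> (\<Sum>j\<in>C0. s j) mod p = z} =
        (if Q (s i) \<and> (\<Sum>j\<in>C0. s j) mod p = z then p ^ card DE else 0)"
    proof (cases "Q (s i) \<and> (\<Sum>j\<in>C0. s j) mod p = z")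
      case False
      then have "{r\<in>PR. Q (s i) \<and> (\<Sum>j\<in>C0. s j) mod p = z} = {}" by blast
      then show ?thesis using False by (simp only: card.empty if_False)
    qed (simp add: card_PR)
    have f1: "F1 (restrict s C0) = (if Q (s i) \<and> (\<Sum>j\<in>C0. s j) mod p = z then \<Prod>j\<in>C0. ps j (s j) else 0)"
      unfolding F1_def using i_C0 by simp
    have pr: "(\<Prod>j\<in>VV - C0. ps j (restrict s (VV - C0) j)) = (\<Prod>j\<in>VV - C0. ps j (s j))" by simp
    show "wS s / DD * real (card {r\<in>PR. Q (fst (s, r) i) \<and> (\<Sum>j\<in>C0. fst (s, r) j) mod p = z}) =
          F1 (restrict s C0) * (\<Prod>j\<in>VV - C0. ps j (restrict s (VV - C0) j))"
      unfolding f1 pr using cardQ wS_split[of s] DD0 by auto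
  qed
  also have "\<dots> = (\<Sum>s1\<in>PiE C0 (\<lambda>_. {0..<p}). F1 s1) * beta"
    unfolding PS_def beta_def by (subst VV_split, rule sum_PiE_split) (use finite_C0 in auto)
  finally show ?thesis unfolding GQ_def F1_def by (simp add: mult.commute)
qed

end

context thm_setting2 begin

lemma Z_cfg:
  assumes w: "w \<in> space M"
  shows "(\<Sum>j\<in>C0. S j w) = (\<Sum>j\<in>C0. fst (cfg w) j) mod p"
proof -
  have "(\<Sum>j\<in>C0. S j w) \<le> (\<Sum>j\<in>VV. S j w)" using C0_VV by (intro sum_mono2) auto
  then have lt: "(\<Sum>j\<in>C0. S j w) < p" using p_large w by fastforce
  have "(\<Sum>j\<in>C0. fst (cfg w) j) = (\<Sum>j\<in>C0. S j w)" using C0_VV unfolding cfg_def by (intro sum.cong) auto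
  then show ?thesis using lt by simp
qed

lemma X_cfg: "S i w = fst (cfg w) i"
  using i_h unfolding cfg_def by simp

abbreviation "VW \<equiv> adversary_view n E Vc p c \<theta> S R"
abbreviation "ZZ \<equiv> (\<lambda>w. \<Sum>j\<in>C0. S j w)"

lemma main:
  "mutual_information b (count_space (S i ` space M)) (count_space (VW ` space M)) (S i) VW =
   mutual_information b (count_space (S i ` space M)) (count_space (ZZ ` space M)) (S i) ZZ"
proof (rule MI_sufficient[where g = gV and FX = "S i ` space M" and FV = "{v \<in> VW ` space M. \<exists>d\<in>Dom. v = Phi d}"])
  show "countable (S i ` space M)" by (rule countableI_type)
  have "VW ` space M \<subseteq> Phi ` Cset" using view_cfg cfg_Cset by auto
  then show "countable (VW ` space M)" using countable_Cset by (meson countable_image countable_subset)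
  show "\<And>a. S i -` {a} \<inter> space M \<in> sets M" using meas_S i_h by simp
  have Veq: "VW -` {a} \<inter> space M = {w \<in> space M. Phi (cfg w) = a}" for a using view_cfg by auto
  show "\<And>a. VW -` {a} \<inter> space M \<in> sets M" unfolding Veq by (rule meas_cfg_event)
  have Zeq: "ZZ -` {a} \<inter> space M = {w \<in> space M. (\<Sum>j\<in>C0. fst (cfg w) j) mod p = a}" for a
    using Z_cfg by auto
  show "\<And>a. ZZ -` {a} \<inter> space M \<in> sets M" unfolding Zeq by (rule meas_cfg_event)
  have "S i ` space M \<subseteq> {0..<p}" using S_lt_p i_h by auto
  then show "finite (S i ` space M)" by (rule finite_subset) simp
  show "S i ` space M \<subseteq> S i ` space M" by simp
  have "{v \<in> VW ` space M. \<exists>d\<in>Dom. v = Phi d} \<subseteq> Phi ` Dom" by blast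
  then show "finite {v \<in> VW ` space M. \<exists>d\<in>Dom. v = Phi d}" using finite_Dom by (rule finite_subset[OF _ finite_imageI])
  show "{v \<in> VW ` space M. \<exists>d\<in>Dom. v = Phi d} \<subseteq> VW ` space M" by auto
  show "\<And>a. a \<in> S i ` space M \<Longrightarrow> a \<notin> S i ` space M \<Longrightarrow> prob (S i -` {a} \<inter> space M) = 0" by simp
  show "prob (VW -` {a} \<inter> space M) = 0"
    if "a \<in> VW ` space M" "a \<notin> {v \<in> VW ` space M. \<exists>d\<in>Dom. v = Phi d}" for a
  proof -
    have "{d\<in>Dom. Phi d = a} = {}" using that by auto
    then show ?thesis unfolding Veq prob_cfg_event[of "\<lambda>d. Phi d = a"] by (simp only: sum.empty)
  qed
  show "\<And>w. w \<in> space M \<Longrightarrow> ZZ w = gV (VW w)" using Z_g by simp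
  fix x v assume x: "x \<in> S i ` space M" and v: "v \<in> {v \<in> VW ` space M. \<exists>d\<in>Dom. v = Phi d}"
  then obtain d0 where d0: "d0 \<in> Dom" "v = Phi d0" by auto
  have gv: "gV v = zW d0" using d0 gV_Phi by simp
  have e1: "(\<lambda>w. (S i w, VW w)) -` {(x, v)} \<inter> space M = {w\<in>space M. fst (cfg w) i = x \<and> W (cfg w) = W d0}"
  proof (intro set_eqI)
    fix w show "w \<in> (\<lambda>w. (S i w, VW w)) -` {(x, v)} \<inter> space M \<longleftrightarrow> w \<in> {w\<in>space M. fst (cfg w) i = x \<and> W (cfg w) = W d0}"
      using view_cfg[of w] X_cfg[of w] Phi_eq_iff[of "cfg w" d0] d0(2) by auto
  qed
  have e2: "ZZ -` {gV v} \<inter> space M = {w\<in>space M. True \<and> (\<Sum>j\<in>C0. fst (cfg w) j) mod p = zW d0}"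
    using Zeq gv by simp
  have e3: "(\<lambda>w. (S i w, ZZ w)) -` {(x, gV v)} \<inter> space M = {w\<in>space M. fst (cfg w) i = x \<and> (\<Sum>j\<in>C0. fst (cfg w) j) mod p = zW d0}"
    using Z_cfg X_cfg gv by auto
  have e4: "VW -` {v} \<inter> space M = {w\<in>space M. True \<and> W (cfg w) = W d0}"
  proof (intro set_eqI)
    fix w show "w \<in> VW -` {v} \<inter> space M \<longleftrightarrow> w \<in> {w\<in>space M. True \<and> W (cfg w) = W d0}"
      using view_cfg[of w] Phi_eq_iff[of "cfg w" d0] d0(2) by auto
  qed
  have p1: "prob ((\<lambda>w. (S i w, VW w)) -` {(x, v)} \<inter> space M) = alpha d0 * GQ (\<lambda>a. a = x) (zW d0)"
    unfolding e1 using prob_cfg_event[of "\<lambda>d. fst d i = x \<and> W d = W d0"] sumA[OF d0(1), of "\<lambda>a. a = x"] by simp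
  have p2: "prob (ZZ -` {gV v} \<inter> space M) = beta * GQ (\<lambda>a. True) (zW d0)"
    unfolding e2 using prob_cfg_event[of "\<lambda>d. True \<and> (\<Sum>j\<in>C0. fst d j) mod p = zW d0"] sumB[of "\<lambda>a. True"] by simp
  have p3: "prob ((\<lambda>w. (S i w, ZZ w)) -` {(x, gV v)} \<inter> space M) = beta * GQ (\<lambda>a. a = x) (zW d0)"
    unfolding e3 using prob_cfg_event[of "\<lambda>d. fst d i = x \<and> (\<Sum>j\<in>C0. fst d j) mod p = zW d0"] sumB[of "\<lambda>a. a = x"] by simp
  have p4: "prob (VW -` {v} \<inter> space M) = alpha d0 * GQ (\<lambda>a. True) (zW d0)"
    unfolding e4 using prob_cfg_event[of "\<lambda>d. True \<and> W d = W d0"] sumA[OF d0(1), of "\<lambda>a. True"] by simp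
  show "prob ((\<lambda>w. (S i w, VW w)) -` {(x, v)} \<inter> space M) * prob (ZZ -` {gV v} \<inter> space M) =
        prob ((\<lambda>w. (S i w, ZZ w)) -` {(x, gV v)} \<inter> space M) * prob (VW -` {v} \<inter> space M)"
    unfolding p1 p2 p3 p4 by (simp add: algebra_simps)
qed

end

theorem theorem1:
  fixes M :: "'m measure" and b :: real
    and n p :: nat and E :: "nat set set" and Vc :: "nat set"
    and S :: "nat \<Rightarrow> 'm \<Rightarrow> nat" and R :: "nat \<Rightarrow> nat \<Rightarrow> 'm \<Rightarrow> nat"
    and c \<theta> :: real and i :: nat
  assumes info: "information_space M b"
    and graph: "simple_graph n E" and conn: "connected_graph n E"
    and Vc_sub: "Vc \<subseteq> {1..n}"
    and corrupt_nbr: "\<forall>k\<in>{1..n} - Vc. \<exists>j\<in>nbrs E k. j \<in> Vc"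
    and p_large: "\<forall>w\<in>space M. (\<Sum>j\<in>{1..n}. S j w) < p"
    and indep: "prob_space.indep_vars M (\<lambda>_. count_space UNIV)
          (case_sum S (\<lambda>(j, k). R j k))
          (Inl ` {1..n} \<union> Inr ` {(j, k). j \<in> {1..n} \<and> k \<in> nbrs E j})"
    and R_unif: "\<forall>j\<in>{1..n}. \<forall>k\<in>nbrs E j.
          distr M (count_space UNIV) (R j k) = measure_pmf (pmf_of_set {0..<p})"
    and c_pos: "c > 0" and theta: "0 \<le> \<theta>" "\<theta> < 1"
    and i_honest: "i \<in> {1..n} - Vc"
  shows "prob_space.mutual_information M b
           (count_space (S i ` space M))
           (count_space (adversary_view n E Vc p c \<theta> S R ` space M))
           (S i) (adversary_view n E Vc p c \<theta> S R)
       = prob_space.mutual_information M b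
           (count_space (S i ` space M))
           (count_space ((\<lambda>w. \<Sum>j\<in>honest_component E ({1..n} - Vc) i. S j w) ` space M))
           (S i) (\<lambda>w. \<Sum>j\<in>honest_component E ({1..n} - Vc) i. S j w)"
proof -
  have ts: "thm_setting M b n p E Vc S R"
    unfolding thm_setting_def thm_setting_axioms_def
    using info graph Vc_sub p_large indep R_unif i_honest by auto
  have ts2: "thm_setting2 M b n p E Vc S R c i"
    unfolding thm_setting2_def thm_setting2_axioms_def
    using ts c_pos i_honest by auto
  interpret T: thm_setting2 M b n p E Vc S R c \<theta> i
    using ts2 unfolding thm_setting2_def thm_setting2_axioms_def by auto
  show ?thesis using T.main unfolding T.hcomp_def by simp
qed

end
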